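(* Consider the setting below (agents ${\cal N}$, action sets ${\cal V}_i$, in-neighborhoods ${\cal N}_i$, delays $d_i$, objectives $f_t$, $t\in[T]$), and let every agent $i\in{\cal N}$ run the algorithm DOG below, producing actions $\{a_{i,t}\}_{t\in[T]}$, with ${\cal A}_t=\{a_{i,t}\}_{i\in{\cal N}}$. Then \[ \mathbb{E}\left[f_t({\cal A}_t)\right] \geq \frac{1}{1+\kappa_f}\, \mathbb{E}\left[f_t({\cal A}^{\star})\right] - \frac{\kappa_f}{1+\kappa_f}\sum_{i\in{\cal N}} \mathbb{E} \left[\mathrm{coin}_{f_t,i}({\cal N}_{i})\right] - \tilde{O}\left(|{\cal N}|\sqrt{\overline{|{\cal V}|+d}\,/\,T}\right), \] where $\kappa_f\triangleq\max_{t\in[T]}\kappa_{f_t}$ and $\overline{|{\cal V}|+d}\triangleq\max_{i\in{\cal N}}(|{\cal V}_i|+d_i)$. In particular, when the network is fully centralized, i.e. ${\cal N}_i={\cal N}\setminus\{i\}$ for all $i$, \[ \mathbb{E}\left[f_t({\cal A}_t)\right] \geq \frac{1}{1+\kappa_f}\,\mathbb{E}\left[f_t({\cal A}^{\star})\right] - \tilde{O}\left(|{\cal N}|\sqrt{\overline{|{\cal V}|+d}\,/\,T}\right), \] and when the network is fully decentralized, i.e. ${\cal N}_i=\emptyset$ for all $i$, \[ \mathbb{E}\left[f_t({\cal A}_t)\right] \geq (1-\kappa_f)\,\mathbb{E}\left[f_t({\cal A}^{\star})\right] - \tilde{O}\left(|{\cal N}|\sqrt{\overline{|{\cal V}|+d}\,/\,T}\right).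 \]
   Context: Setting. ${\cal N}$ is a finite set of agents; each agent $i$ has a finite action set ${\cal V}_i$; $[T]=\{1,\dots,T\}$. Agents communicate over a directed graph ${\cal G}=({\cal N},{\cal E})$, which may be disconnected. ${\cal N}_i$ (agent $i$'s neighborhood) is the set of agents from which $i$ can receive information, possibly via multi-hop communication; it is constant over $[T]$. The communication delay $d_i$ is the number of edges from the furthest multi-hop in-neighbor to $i$; information (in particular the actions $\{a_{j,t}\}_{j\in{\cal N}_i}$ chosen at time $t$) reaches $i$ at time $t+d_i$. For each $t$, $f_t$ is a set function on subsets of the (disjoint) union of the ${\cal V}_i$ which is: normalized ($f_t(\emptyset)=0$); non-decreasing ($f_t({\cal A})\le f_t({\cal B})$ for ${\cal A}\subseteq{\cal B}$); submodular ($f_t(s\mid{\cal A})\ge f_t(s\mid{\cal B})$ for ${\cal A}\subseteq{\cal B}$, where $f(s\mid{\cal A})\triangleq f({\cal A}\cup\{s\})-f({\cal A})$); and 2nd-order submodular ($f_t(s\mid{\cal C})-f_t(s\mid{\cal A}\cup{\cal C})\ge f_t(s\mid{\cal B}\cup{\cal C})-f_t(s\mid{\cal A}\cup{\cal B}\cup{\cal C})$ for disjoint ${\cal A},{\cal B},{\cal C}$ and any $s$). The functions $f_t$ are unknown a priori; agent $i$ can evaluate $f_t({\cal A})$ for ${\cal A}\subseteq\{a_{i,t}\}\cup\{a_{j,t}\}_{j\in{\cal N}_i}$ only after time $t+d_i$. The goal is to maximize $\sum_{t=1}^T f_t(\{a_{i,t}\}_{i\in{\cal N}})$. Algorithm DOG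 (run by each agent $i$): set $\eta_i=\sqrt{\log|{\cal V}_i|/[(|{\cal V}_i|+d_i)T]}$ and weights $w_{a,1}=1$ for all $a\in{\cal V}_i$. For each $t\in[T]$: form $p_t=w_t/\|w_t\|_1$; draw $a_{i,t}\in{\cal V}_i$ from $p_t$; broadcast $a_{i,t}$ (possibly via multi-hop relaying); receive neighbors' actions $\{a_{j,s}\}_{j\in{\cal N}_i}$ for $s$ with $s+d_i=t$; compute $r_{a_{i,s},s}=f_s(a_{i,s}\mid\{a_{j,s}\}_{j\in{\cal N}_i})$ normalized to $[0,1]$; for all $a\in{\cal V}_i$ set $\hat r_{a,s}=1-\frac{\mathbf{1}(a_{i,s}=a)}{p_{a,s}}(1-r_{a_{i,s},s})$ and $w_{a,t+1}=w_{a,t}\exp(\eta_i\hat r_{a,s})$. Notation. ${\cal A}^{\star}\in\arg\max_{a_i\in{\cal V}_i,\,\forall i\in{\cal N}}\sum_{t=1}^T f_t(\{a_i\}_{i\in{\cal N}})$ is an optimal (time-invariant) joint action. Curvature of a normalized submodular $f$ on ground set ${\cal V}$: $\kappa_f\triangleq 1-\min_{v\in{\cal V}}[f({\cal V})-f({\cal V}\setminus\{v\})]/f(v)$. Centralization of information at time $t$: $\mathrm{coin}_{f_t,i}({\cal N}_i)\triangleq f_t(a_{i,t})-f_t(a_{i,t}\mid\{a_{j,t}\}_{j\in{\cal N}_i^c})$, where ${\cal N}_i^c$ is the complement of ${\cal N}_i$ in ${\cal N}\setminus\{i\}$. The expectation $\mathbb{E}$ is with respect to DOG's internal randomness (the paper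 uses $\mathbb{E}[f_t(\cdot)]$ as the expectation of the time average $\frac1T\sum_{t=1}^T f_t(\cdot)$), and $\tilde O(\cdot)$ hides logarithmic factors. *)

theory Defs
  imports "HOL-Analysis.Analysis" "HOL-Probability.Probability"
begin

text \<open>Agent i has a finite nonempty action set V i (a set of naturals); the ground set of
  the objectives is the disjoint union of the action sets, realised as the set of pairs
  (i, v) with i in N and v in V i.  A joint action is a function a from agents to
  actions; the corresponding set of chosen elements for the agents in S is Act S a.
  A history H maps a time step t to the joint action H t chosen at time t.\<close>

definition ground :: "nat set \<Rightarrow> (nat \<Rightarrow> nat set) \<Rightarrow> (nat \<times> nat) set" where
  "ground N V = Sigma N V"

definition Act :: "nat set \<Rightarrow> (nat \<Rightarrow> nat) \<Rightarrow> (nat \<times> nat) set" where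
  "Act S a = (\<lambda>i. (i, a i)) ` S"

definition marg :: "((nat \<times> nat) set \<Rightarrow> real) \<Rightarrow> nat \<times> nat \<Rightarrow> (nat \<times> nat) set \<Rightarrow> real" where
  "marg g s A = g (A \<union> {s}) - g A"

definition normalized :: "((nat \<times> nat) set \<Rightarrow> real) \<Rightarrow> bool" where
  "normalized g \<longleftrightarrow> g {} = 0"

definition nondecreasing_on :: "(nat \<times> nat) set \<Rightarrow> ((nat \<times> nat) set \<Rightarrow> real) \<Rightarrow> bool" where
  "nondecreasing_on Om g \<longleftrightarrow> (\<forall>A B. A \<subseteq> B \<and> B \<subseteq> Om \<longrightarrow> g A \<le> g B)"

definition submodular_on :: "(nat \<times> nat) set \<Rightarrow> ((nat \<times> nat) set \<Rightarrow> real) \<Rightarrow> bool" where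
  "submodular_on Om g \<longleftrightarrow>
     (\<forall>A B s. A \<subseteq> B \<and> B \<subseteq> Om \<and> s \<in> Om \<longrightarrow> marg g s A \<ge> marg g s B)"

definition second_order_submodular_on :: "(nat \<times> nat) set \<Rightarrow> ((nat \<times> nat) set \<Rightarrow> real) \<Rightarrow> bool" where
  "second_order_submodular_on Om g \<longleftrightarrow>
     (\<forall>A B C s. A \<subseteq> Om \<and> B \<subseteq> Om \<and> C \<subseteq> Om \<and> s \<in> Om \<and>
        A \<inter> B = {} \<and> A \<inter> C = {} \<and> B \<inter> C = {} \<longrightarrow>
        marg g s C - marg g s (A \<union> C) \<ge> marg g s (B \<union> C) - marg g s (A \<union> B \<union> C))"

text \<open>Elements with g {v} = 0 are excluded (standard
  convention, the ratio is undefined for them); if there is no such element the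
  curvature is 0.\<close>
definition curvature :: "(nat \<times> nat) set \<Rightarrow> ((nat \<times> nat) set \<Rightarrow> real) \<Rightarrow> real" where
  "curvature Om g =
     (let R = {(g Om - g (Om - {v})) / g {v} | v. v \<in> Om \<and> g {v} > 0}
      in if R = {} then 0 else 1 - Min R)"

definition kappa :: "nat set \<Rightarrow> (nat \<Rightarrow> nat set) \<Rightarrow> nat \<Rightarrow> (nat \<Rightarrow> (nat \<times> nat) set \<Rightarrow> real) \<Rightarrow> real" where
  "kappa N V T f = Max ((\<lambda>t. curvature (ground N V) (f t)) ` {1..T})"

definition coin :: "nat set \<Rightarrow> (nat \<Rightarrow> nat set) \<Rightarrow> ((nat \<times> nat) set \<Rightarrow> real) \<Rightarrow> nat \<Rightarrow> (nat \<Rightarrow> nat) \<Rightarrow> real" where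
  "coin N Nb g i a = g {(i, a i)} - marg g (i, a i) (Act (N - {i} - Nb i) a)"

definition dog_eta :: "(nat \<Rightarrow> nat set) \<Rightarrow> (nat \<Rightarrow> nat) \<Rightarrow> nat \<Rightarrow> nat \<Rightarrow> real" where
  "dog_eta V d T i = sqrt (ln (real (card (V i))) / ((real (card (V i)) + real (d i)) * real T))"

text \<open>Weights w_{a,t} of agent i at time t (t \<ge> 1) given the history H.
  w_{a,1} = 1; at the end of step t, if s = t - d i \<ge> 1, agent i has received the
  neighbours' actions at time s and sets w_{a,t+1} = w_{a,t} exp(eta_i rhat_{a,s}), with
  rhat_{a,s} = 1 - 1(a_{i,s} = a) / p_{a,s} (1 - r_s), r_s = f_s(a_{i,s} | neighbours' actions
  at s) / M (M being the normalising upper bound making r_s lie in [0,1]);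
  otherwise w_{a,t+1} = w_{a,t}.  The weight at time t only depends on H at times
  at most t - 1 - d i.\<close>
fun dog_w :: "(nat \<Rightarrow> nat set) \<Rightarrow> (nat \<Rightarrow> nat set) \<Rightarrow> (nat \<Rightarrow> nat) \<Rightarrow> nat \<Rightarrow>
    (nat \<Rightarrow> (nat \<times> nat) set \<Rightarrow> real) \<Rightarrow> real \<Rightarrow> nat \<Rightarrow> (nat \<Rightarrow> nat \<Rightarrow> nat) \<Rightarrow> nat \<Rightarrow> nat \<Rightarrow> real"
where
  "dog_w V Nb d T f M i H 0 a = 1"
| "dog_w V Nb d T f M i H (Suc t) a =
     dog_w V Nb d T f M i H t a *
     (if d i + 1 \<le> t then
        exp (dog_eta V d T i *
          (1 - (if H (t - d i) i = a
                then (\<Sum>c\<in>V i. dog_w V Nb d T f M i H (t - d i) c) / dog_w V Nb d T f M i H (t - d i) a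
                else 0)
               * (1 - marg (f (t - d i)) (i, H (t - d i) i) (Act (Nb i) (H (t - d i))) / M)))
      else 1)"

definition dog_p :: "(nat \<Rightarrow> nat set) \<Rightarrow> (nat \<Rightarrow> nat set) \<Rightarrow> (nat \<Rightarrow> nat) \<Rightarrow> nat \<Rightarrow>
    (nat \<Rightarrow> (nat \<times> nat) set \<Rightarrow> real) \<Rightarrow> real \<Rightarrow> nat \<Rightarrow> (nat \<Rightarrow> nat \<Rightarrow> nat) \<Rightarrow> nat \<Rightarrow> nat pmf"
where
  "dog_p V Nb d T f M i H t =
     embed_pmf (\<lambda>a. if a \<in> V i
                     then dog_w V Nb d T f M i H t a / (\<Sum>b\<in>V i. dog_w V Nb d T f M i H t b)
                     else 0)"

text \<open>Distribution of the history after the first t steps of DOG run by all agents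
  in N: at each step every agent draws its action independently from its own
  distribution.  (Entries of the history for agents outside N, or times > t, are 0.)\<close>
fun dog_traj :: "nat set \<Rightarrow> (nat \<Rightarrow> nat set) \<Rightarrow> (nat \<Rightarrow> nat set) \<Rightarrow> (nat \<Rightarrow> nat) \<Rightarrow> nat \<Rightarrow>
    (nat \<Rightarrow> (nat \<times> nat) set \<Rightarrow> real) \<Rightarrow> real \<Rightarrow> nat \<Rightarrow> (nat \<Rightarrow> nat \<Rightarrow> nat) pmf"
where
  "dog_traj N V Nb d T f M 0 = return_pmf (\<lambda>_ _. 0)"
| "dog_traj N V Nb d T f M (Suc t) =
     bind_pmf (dog_traj N V Nb d T f M t)
       (\<lambda>H. map_pmf (\<lambda>A. H(Suc t := A))
              (Pi_pmf N 0 (\<lambda>i. dog_p V Nb d T f M i H (Suc t))))"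

definition dog_E :: "nat set \<Rightarrow> (nat \<Rightarrow> nat set) \<Rightarrow> (nat \<Rightarrow> nat set) \<Rightarrow> (nat \<Rightarrow> nat) \<Rightarrow> nat \<Rightarrow>
    (nat \<Rightarrow> (nat \<times> nat) set \<Rightarrow> real) \<Rightarrow> real \<Rightarrow> ((nat \<Rightarrow> nat \<Rightarrow> nat) \<Rightarrow> nat \<Rightarrow> real) \<Rightarrow> real"
where
  "dog_E N V Nb d T f M F =
     measure_pmf.expectation (dog_traj N V Nb d T f M T)
       (\<lambda>H. (1 / real T) * (\<Sum>t\<in>{1..T}. F H t))"

definition dog_setting :: "nat set \<Rightarrow> (nat \<Rightarrow> nat set) \<Rightarrow> (nat \<Rightarrow> nat set) \<Rightarrow> (nat \<Rightarrow> nat) \<Rightarrow> nat \<Rightarrow>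
    (nat \<Rightarrow> (nat \<times> nat) set \<Rightarrow> real) \<Rightarrow> real \<Rightarrow> (nat \<Rightarrow> nat) \<Rightarrow> bool"
where
  "dog_setting N V Nb d T f M Astar \<longleftrightarrow>
     finite N \<and> (\<forall>i\<in>N. finite (V i) \<and> V i \<noteq> {}) \<and>
     (\<forall>i\<in>N. Nb i \<subseteq> N - {i}) \<and> T > 0 \<and> M > 0 \<and>
     (\<forall>t\<in>{1..T}. normalized (f t) \<and> nondecreasing_on (ground N V) (f t) \<and>
        submodular_on (ground N V) (f t) \<and> second_order_submodular_on (ground N V) (f t)) \<and>
     (\<forall>t\<in>{1..T}. \<forall>x\<in>ground N V. f t {x} \<le> M) \<and>
     (\<forall>i\<in>N. Astar i \<in> V i) \<and>
     (\<forall>a. (\<forall>i\<in>N. a i \<in> V i) \<longrightarrow>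
        (\<Sum>t\<in>{1..T}. f t (Act N a)) \<le> (\<Sum>t\<in>{1..T}. f t (Act N Astar)))"

definition Vd_bar :: "nat set \<Rightarrow> (nat \<Rightarrow> nat set) \<Rightarrow> (nat \<Rightarrow> nat) \<Rightarrow> nat" where
  "Vd_bar N V d = Max ((\<lambda>i. card (V i) + d i) ` N)"

end

theory Submission
  imports Defs
begin


lemma Act_sub: "S \<subseteq> N \<Longrightarrow> (\<forall>i\<in>S. a i \<in> V i) \<Longrightarrow> Act S a \<subseteq> ground N V"
  by (auto simp: Act_def ground_def)

lemma Act_mem: "i \<in> N \<Longrightarrow> a i \<in> V i \<Longrightarrow> (i, a i) \<in> ground N V"
  by (auto simp: ground_def)

lemma finite_ground: "finite N \<Longrightarrow> (\<forall>i\<in>N. finite (V i)) \<Longrightarrow> finite (ground N V)"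
  by (auto simp: ground_def)

lemma submodD: "submodular_on Om g \<Longrightarrow> A \<subseteq> B \<Longrightarrow> B \<subseteq> Om \<Longrightarrow> s \<in> Om \<Longrightarrow> marg g s B \<le> marg g s A"
  unfolding submodular_on_def by blast

lemma monoD: "nondecreasing_on Om g \<Longrightarrow> A \<subseteq> B \<Longrightarrow> B \<subseteq> Om \<Longrightarrow> g A \<le> g B"
  unfolding nondecreasing_on_def by blast

lemma nonneg_on: "normalized g \<Longrightarrow> nondecreasing_on Om g \<Longrightarrow> A \<subseteq> Om \<Longrightarrow> g A \<ge> 0"
  unfolding normalized_def nondecreasing_on_def by (metis empty_subsetI)

lemma curv_facts:
  assumes fin: "finite Om" and mono: "nondecreasing_on Om g" and sub: "submodular_on Om g"
    and nor: "normalized g"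
  shows "0 \<le> curvature Om g" "curvature Om g \<le> 1"
    "\<And>x. x \<in> Om \<Longrightarrow> g Om - g (Om - {x}) \<ge> (1 - curvature Om g) * g {x}"
proof -
  define R where "R = {(g Om - g (Om - {v})) / g {v} | v. v \<in> Om \<and> g {v} > 0}"
  have finR: "finite R" unfolding R_def using fin by (intro finite_image_set) auto
  have Rb: "r \<in> R \<Longrightarrow> 0 \<le> r \<and> r \<le> 1" for r
  proof -
    assume "r \<in> R"
    then obtain v where v: "r = (g Om - g (Om - {v})) / g {v}" "v \<in> Om" "g {v} > 0"
      unfolding R_def by blast
    have "g (Om - {v}) \<le> g Om" using mono unfolding nondecreasing_on_def by auto
    moreover have "marg g v (Om - {v}) \<le> marg g v {}"
      using v(2) by (intro submodD[OF sub]) auto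
    then have "g Om - g (Om - {v}) \<le> g {v}"
      using nor v(2) unfolding marg_def normalized_def by (simp add: insert_absorb)
    ultimately show ?thesis unfolding v(1) using v(3) by (auto simp: divide_le_eq_1)
  qed
  have cdef: "curvature Om g = (if R = {} then 0 else 1 - Min R)"
    unfolding curvature_def R_def Let_def by simp
  show "0 \<le> curvature Om g"
  proof (cases "R = {}")
    case False
    then have "Min R \<in> R" using finR by auto
    then show ?thesis using Rb cdef False by auto
  qed (simp add: cdef)
  show "curvature Om g \<le> 1"
  proof (cases "R = {}")
    case False
    then have "Min R \<in> R" using finR by auto
    then show ?thesis using Rb cdef False by auto
  qed (simp add: cdef)
  fix x assume x: "x \<in> Om"
  have ge0: "g {x} \<ge> 0" using nonneg_on[OF nor mono] x by auto
  have mon: "g (Om - {x}) \<le> g Om" using mono unfolding nondecreasing_on_def by auto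
  show "g Om - g (Om - {x}) \<ge> (1 - curvature Om g) * g {x}"
  proof (cases "g {x} > 0")
    case True
    define r where "r = (g Om - g (Om - {x})) / g {x}"
    have rR: "r \<in> R" unfolding R_def r_def using x True by blast
    then have ne: "R \<noteq> {}" by auto
    have "Min R \<le> r" using finR rR by auto
    then have "(1 - curvature Om g) * g {x} \<le> r * g {x}"
      using cdef ne True by (intro mult_right_mono) auto
    also have "r * g {x} = g Om - g (Om - {x})" unfolding r_def using True by simp
    finally show ?thesis .
  next
    case False
    then have "g {x} = 0" using ge0 by auto
    then show ?thesis using mon by simp
  qed
qed

lemma sum_marg_upper:
  assumes sub: "submodular_on Om g" and fin: "finite S" and SO: "S \<subseteq> Om" and AO: "A \<subseteq> Om"
  shows "g (A \<union> S) - g A \<le> (\<Sum>x\<in>S. marg g x A)"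
  using fin SO
proof (induction S rule: finite_induct)
  case empty then show ?case by simp
next
  case (insert x S)
  have "marg g x (A \<union> S) \<le> marg g x A"
    using sub insert.prems AO by (intro submodD[OF sub]) auto
  moreover have "g (A \<union> insert x S) = g (A \<union> S) + marg g x (A \<union> S)"
    unfolding marg_def by (simp add: Un_insert_right)
  ultimately show ?case using insert by simp
qed

lemma sum_marg_lower:
  assumes sub: "submodular_on Om g" and fin: "finite S" and SO: "S \<subseteq> Om" and BO: "B \<subseteq> Om"
    and dis: "S \<inter> B = {}"
  shows "g (B \<union> S) - g B \<ge> (\<Sum>x\<in>S. marg g x (Om - {x}))"
  using fin SO dis
proof (induction S rule: finite_induct)
  case empty then show ?case by simp
next
  case (insert x S)
  have "marg g x (B \<union> S) \<ge> marg g x (Om - {x})"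
    using sub insert.prems insert.hyps BO by (intro submodD[OF sub]) auto
  moreover have "g (B \<union> insert x S) = g (B \<union> S) + marg g x (B \<union> S)"
    unfolding marg_def by (simp add: Un_insert_right)
  ultimately show ?case using insert by simp
qed

lemma sum_marg_all:
  assumes sub: "submodular_on (ground N V) g" and nor: "normalized g"
    and finN: "finite N" and a: "\<forall>i\<in>N. a i \<in> V i" and SN: "S \<subseteq> N"
  shows "(\<Sum>i\<in>S. marg g (i, a i) (Act (N - {i}) a)) \<le> g (Act S a)"
  using finite_subset[OF SN finN] SN
proof (induction S rule: finite_induct)
  case empty then show ?case using nor by (simp add: normalized_def Act_def)
next
  case (insert j S)
  have "Act S a \<subseteq> Act (N - {j}) a" using insert by (auto simp: Act_def)
  moreover have "Act (N - {j}) a \<subseteq> ground N V" using a by (intro Act_sub) auto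
  moreover have "(j, a j) \<in> ground N V" using insert a by (auto simp: ground_def)
  ultimately have "marg g (j, a j) (Act (N - {j}) a) \<le> marg g (j, a j) (Act S a)"
    using submodD[OF sub] by blast
  moreover have "g (Act (insert j S) a) = g (Act S a) + marg g (j, a j) (Act S a)"
    unfolding marg_def Act_def by (simp add: insert_commute)
  ultimately show ?case using insert by simp
qed


lemma so2D: "second_order_submodular_on Om g \<Longrightarrow> A \<subseteq> Om \<Longrightarrow> B \<subseteq> Om \<Longrightarrow> C \<subseteq> Om \<Longrightarrow> s \<in> Om \<Longrightarrow>
   A \<inter> B = {} \<Longrightarrow> A \<inter> C = {} \<Longrightarrow> B \<inter> C = {} \<Longrightarrow>
   marg g s C - marg g s (A \<union> C) \<ge> marg g s (B \<union> C) - marg g s (A \<union> B \<union> C)"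
  unfolding second_order_submodular_on_def by blast

lemma Act_union: "Act (S \<union> S') a = Act S a \<union> Act S' a" by (auto simp: Act_def)

lemma Act_disj: "S \<inter> S' = {} \<Longrightarrow> Act S a \<inter> Act S' b = {}" by (auto simp: Act_def)

lemma comb_main:
  assumes finN: "finite N" and finV: "\<forall>i\<in>N. finite (V i)"
    and nor: "normalized g" and mono: "nondecreasing_on (ground N V) g"
    and sub: "submodular_on (ground N V) g" and so2: "second_order_submodular_on (ground N V) g"
    and Nb: "\<forall>i\<in>N. Nb i \<subseteq> N - {i}" and a: "\<forall>i\<in>N. a i \<in> V i" and as: "\<forall>i\<in>N. as i \<in> V i"
    and kc: "curvature (ground N V) g \<le> \<kappa>" and k1: "\<kappa> \<le> 1"
  shows "g (Act N as) - (\<Sum>i\<in>N. marg g (i, as i) (Act (Nb i) a) - marg g (i, a i) (Act (Nb i) a))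
     \<le> (1 + \<kappa>) * g (Act N a) + \<kappa> * (\<Sum>i\<in>N. coin N Nb g i a)"
proof -
  define Om where "Om = ground N V"
  have finOm: "finite Om" unfolding Om_def using finN finV by (rule finite_ground)
  have cf: "0 \<le> curvature Om g" "curvature Om g \<le> 1"
      "\<And>x. x \<in> Om \<Longrightarrow> g Om - g (Om - {x}) \<ge> (1 - curvature Om g) * g {x}"
    using curv_facts[OF finOm mono[folded Om_def] sub[folded Om_def] nor] by auto
  have k0: "0 \<le> \<kappa>" using cf kc Om_def by auto
  define A where "A = Act N a"
  define As where "As = Act N as"
  define D where "D = {i\<in>N. a i \<noteq> as i}"
  have DN: "D \<subseteq> N" unfolding D_def by auto
  have finD: "finite D" using finN DN finite_subset by blast
  have AO: "A \<subseteq> Om" unfolding A_def Om_def using a by (intro Act_sub) auto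
  have AsO: "As \<subseteq> Om" unfolding As_def Om_def using as by (intro Act_sub) auto
  have ADO: "Act D a \<subseteq> Om" "Act D as \<subseteq> Om" unfolding Om_def using a as DN by (auto simp: Act_def ground_def)
  have U1: "A \<union> As = A \<union> Act D as" unfolding A_def As_def D_def Act_def by (auto simp: image_iff; metis)
  have U2: "A \<union> As = As \<union> Act D a" unfolding A_def As_def D_def Act_def by (auto simp: image_iff; metis)
  have dis: "Act D a \<inter> As = {}" unfolding As_def D_def Act_def by auto
  have inj: "inj_on (\<lambda>i. (i, h i)) S" for h :: "nat \<Rightarrow> nat" and S by (auto simp: inj_on_def)
  have sumAct: "(\<Sum>x\<in>Act S h. F x) = (\<Sum>i\<in>S. F (i, h i))" for S h and F :: "nat \<times> nat \<Rightarrow> real"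
    unfolding Act_def by (rule sum.reindex[OF inj, unfolded comp_def])
  have s4: "g As \<le> g (A \<union> As)" using AO AsO by (intro monoD[OF mono[folded Om_def]]) auto
  have s5: "g (A \<union> As) - g A \<le> (\<Sum>i\<in>D. marg g (i, as i) (Act (Nb i) a))"
  proof -
    have "g (A \<union> As) - g A \<le> (\<Sum>x\<in>Act D as. marg g x A)"
      unfolding U1 using finD ADO AO by (intro sum_marg_upper[OF sub[folded Om_def]]) (auto simp: Act_def)
    also have "\<dots> = (\<Sum>i\<in>D. marg g (i, as i) A)" by (rule sumAct)
    also have "\<dots> \<le> (\<Sum>i\<in>D. marg g (i, as i) (Act (Nb i) a))"
    proof (rule sum_mono)
      fix i assume i: "i \<in> D"
      show "marg g (i, as i) A \<le> marg g (i, as i) (Act (Nb i) a)"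
        using i DN Nb as AO unfolding A_def Om_def
        by (intro submodD[OF sub]) (auto simp: Act_def ground_def)
    qed
    finally show ?thesis .
  qed
  have s6: "g (A \<union> As) - g As \<ge> (\<Sum>i\<in>D. (1 - \<kappa>) * g {(i, a i)})"
  proof -
    have "(\<Sum>i\<in>D. (1 - \<kappa>) * g {(i, a i)}) \<le> (\<Sum>i\<in>D. marg g (i, a i) (Om - {(i, a i)}))"
    proof (rule sum_mono)
      fix i assume i: "i \<in> D"
      have xO: "(i, a i) \<in> Om" using i DN a unfolding Om_def by (auto simp: ground_def)
      have gx: "g {(i, a i)} \<ge> 0" using nonneg_on[OF nor mono] xO Om_def by auto
      have "(1 - \<kappa>) * g {(i, a i)} \<le> (1 - curvature Om g) * g {(i, a i)}"
        using kc gx Om_def by (intro mult_right_mono) auto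
      also have "\<dots> \<le> g Om - g (Om - {(i, a i)})" using cf(3)[OF xO] .
      also have "\<dots> = marg g (i, a i) (Om - {(i, a i)})" unfolding marg_def using xO
        by (simp add: insert_absorb)
      finally show "(1 - \<kappa>) * g {(i, a i)} \<le> marg g (i, a i) (Om - {(i, a i)})" .
    qed
    also have "\<dots> = (\<Sum>x\<in>Act D a. marg g x (Om - {x}))" by (rule sumAct[symmetric])
    also have "\<dots> \<le> g (As \<union> Act D a) - g As"
      using finD ADO AsO dis by (intro sum_marg_lower[OF sub[folded Om_def]]) (auto simp: Act_def)
    finally show ?thesis unfolding U2 .
  qed
  define c where "c i = coin N Nb g i a" for i
  define m where "m i = marg g (i, a i) (Act (N - {i}) a)" for i
  have s8: "marg g (i, a i) (Act (Nb i) a) - (1 - \<kappa>) * g {(i, a i)} \<le> \<kappa> * (c i + m i)"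
    and s9: "c i \<ge> 0" "m i \<ge> 0" if i: "i \<in> N" for i
  proof -
    define s where "s = (i, a i)"
    define A' where "A' = Act (Nb i) a"
    define B where "B = Act (N - {i} - Nb i) a"
    have sO: "s \<in> Om" unfolding s_def Om_def using i a by (auto simp: ground_def)
    have A'O: "A' \<subseteq> Om" unfolding A'_def Om_def using Nb a i by (intro Act_sub) auto
    have BO: "B \<subseteq> Om" unfolding B_def Om_def using a by (intro Act_sub) auto
    have AB: "A' \<union> B = Act (N - {i}) a" unfolding A'_def B_def Act_union[symmetric]
      using Nb i by (intro arg_cong[where f="\<lambda>S. Act S a"]) auto
    have ABd: "A' \<inter> B = {}" unfolding A'_def B_def by (rule Act_disj) auto
    have "marg g s {} - marg g s (A' \<union> {}) \<ge> marg g s (B \<union> {}) - marg g s (A' \<union> B \<union> {})"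
      using ABd A'O BO sO by (intro so2D[OF so2[folded Om_def]]) auto
    then have e1: "marg g s A' \<le> g {s} - marg g s B + marg g s (Act (N - {i}) a)"
      using nor AB unfolding marg_def normalized_def by simp
    have e2: "marg g s (Act (N - {i}) a) \<le> marg g s B"
      using AB sO A'O BO by (intro submodD[OF sub[folded Om_def]]) auto
    have e3: "marg g s B \<le> marg g s {}"
      using sO BO by (intro submodD[OF sub[folded Om_def]]) auto
    have e4: "marg g s {} = g {s}" using nor unfolding marg_def normalized_def by simp
    have e5: "marg g s (Act (N - {i}) a) \<ge> 0"
      using sO AB A'O BO unfolding marg_def by (intro diff_ge_0_iff_ge[THEN iffD2] monoD[OF mono[folded Om_def]]) auto
    have cc: "c i = g {s} - marg g s B" unfolding c_def coin_def s_def B_def by simp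
    have mm: "m i = marg g s (Act (N - {i}) a)" unfolding m_def s_def by simp
    show "c i \<ge> 0" using cc e3 e4 by simp
    show "m i \<ge> 0" using mm e5 by simp
    have "marg g s A' - (1 - \<kappa>) * g {s} \<le> (c i + m i) - (1 - \<kappa>) * (c i + m i)"
    proof -
      have "c i + m i \<le> g {s}" using cc mm e2 by simp
      then have "(1 - \<kappa>) * (c i + m i) \<le> (1 - \<kappa>) * g {s}" using k1 by (intro mult_left_mono) auto
      moreover have "marg g s A' \<le> c i + m i" using e1 cc mm by simp
      ultimately show ?thesis by linarith
    qed
    also have "\<dots> = \<kappa> * (c i + m i)" by (simp add: algebra_simps)
    finally show "marg g (i, a i) (Act (Nb i) a) - (1 - \<kappa>) * g {(i, a i)} \<le> \<kappa> * (c i + m i)"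
      unfolding s_def A'_def .
  qed
  have s7: "(\<Sum>i\<in>N. marg g (i, as i) (Act (Nb i) a) - marg g (i, a i) (Act (Nb i) a))
      = (\<Sum>i\<in>D. marg g (i, as i) (Act (Nb i) a) - marg g (i, a i) (Act (Nb i) a))"
    using finN DN by (intro sum.mono_neutral_right) (auto simp: D_def)
  have s10: "(\<Sum>i\<in>N. m i) \<le> g A"
    unfolding m_def A_def using sub nor finN a by (intro sum_marg_all) auto
  have "(\<Sum>i\<in>D. marg g (i, a i) (Act (Nb i) a) - (1 - \<kappa>) * g {(i, a i)}) \<le> (\<Sum>i\<in>D. \<kappa> * (c i + m i))"
    using DN s8 by (intro sum_mono) auto
  also have "\<dots> \<le> (\<Sum>i\<in>N. \<kappa> * (c i + m i))"
    using finN DN s9 k0 by (intro sum_mono2) auto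
  also have "\<dots> = \<kappa> * (\<Sum>i\<in>N. c i) + \<kappa> * (\<Sum>i\<in>N. m i)"
    by (simp add: sum_distrib_left sum.distrib algebra_simps)
  also have "\<dots> \<le> \<kappa> * (\<Sum>i\<in>N. c i) + \<kappa> * g A" using s10 k0 by (intro add_left_mono mult_left_mono) auto
  finally have s11: "(\<Sum>i\<in>D. marg g (i, a i) (Act (Nb i) a) - (1 - \<kappa>) * g {(i, a i)})
       \<le> \<kappa> * (\<Sum>i\<in>N. c i) + \<kappa> * g A" .
  have "g As - (\<Sum>i\<in>D. marg g (i, as i) (Act (Nb i) a) - marg g (i, a i) (Act (Nb i) a))
      \<le> g A + (\<Sum>i\<in>D. marg g (i, a i) (Act (Nb i) a) - (1 - \<kappa>) * g {(i, a i)})"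
    using s4 s5 s6 by (simp add: sum_subtractf)
  then show ?thesis using s7 s11 unfolding A_def As_def c_def by (simp add: algebra_simps)
qed


context
  fixes V :: "nat \<Rightarrow> nat set" and Nb :: "nat \<Rightarrow> nat set" and d :: "nat \<Rightarrow> nat" and T :: nat
    and f :: "nat \<Rightarrow> (nat \<times> nat) set \<Rightarrow> real" and M :: real and i :: nat
begin

declare dog_w.simps(2)[simp del]

abbreviation "w \<equiv> dog_w V Nb d T f M i"
abbreviation "\<eta> \<equiv> dog_eta V d T i"

definition "WW H t = (\<Sum>c\<in>V i. w H t c)"
definition "pp H t a = w H t a / WW H t"
definition "ll H s b = 1 - marg (f s) (i, b) (Act (Nb i) (H s)) / M"
definition "lh H s a = (if H s i = a then ll H s a / pp H s a else 0)"

lemma w_pos: "w H t a > 0"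
proof (induction t)
  case 0 then show ?case by simp
next
  case (Suc t)
  show ?case using Suc.IH by (subst dog_w.simps(2)) simp
qed

lemma WW_pos: "finite (V i) \<Longrightarrow> V i \<noteq> {} \<Longrightarrow> WW H t > 0"
  unfolding WW_def using w_pos by (intro sum_pos) auto

lemma pp_pos: "finite (V i) \<Longrightarrow> V i \<noteq> {} \<Longrightarrow> pp H t a > 0"
  unfolding pp_def using w_pos[of H t a] WW_pos[of H t] by (simp add: divide_pos_pos)

lemma pp_sum: "finite (V i) \<Longrightarrow> V i \<noteq> {} \<Longrightarrow> (\<Sum>a\<in>V i. pp H t a) = 1"
proof -
  assume a: "finite (V i)" "V i \<noteq> {}"
  have "(\<Sum>a\<in>V i. pp H t a) = (\<Sum>a\<in>V i. w H t a) / WW H t"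
    unfolding pp_def by (simp add: sum_divide_distrib)
  also have "\<dots> = 1" using WW_pos[OF a, of H t] unfolding WW_def by simp
  finally show ?thesis .
qed

lemma w_Suc_no: "\<not> d i + 1 \<le> t \<Longrightarrow> w H (Suc t) a = w H t a"
  by (subst dog_w.simps(2)) simp

lemma w_Suc_upd: "d i + 1 \<le> t \<Longrightarrow> w H (Suc t) a = w H t a * exp (\<eta> * (1 - lh H (t - d i) a))"
proof -
  assume t: "d i + 1 \<le> t"
  define s where "s = t - d i"
  have e: "(if H s i = a then (\<Sum>c\<in>V i. w H s c) / w H s a else 0) *
            (1 - marg (f s) (i, H s i) (Act (Nb i) (H s)) / M) = lh H s a"
    unfolding lh_def pp_def WW_def ll_def by auto
  show ?thesis using t e unfolding s_def by (subst dog_w.simps(2)) simp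
qed

lemma w_small: "t \<le> d i + 1 \<Longrightarrow> w H t a = 1"
proof (induction t)
  case 0 then show ?case by simp
next
  case (Suc t)
  then show ?case using w_Suc_no[of t H a] by simp
qed

lemma w_dep: "(\<And>r. r + d i < t \<Longrightarrow> H r = H' r) \<Longrightarrow> w H t a = w H' t a"
proof (induction t arbitrary: a rule: less_induct)
  case (less t)
  show ?case
  proof (cases t)
    case 0 then show ?thesis by simp
  next
    case (Suc t')
    have IH1: "w H t' c = w H' t' c" for c
    proof (rule less.IH)
      show "t' < t" using Suc by simp
      fix r assume "r + d i < t'"
      then have "r + d i < t" using Suc by simp
      then show "H r = H' r" by (rule less.prems)
    qed
    show ?thesis
    proof (cases "d i + 1 \<le> t'")
      case True
      define s where "s = t' - d i"
      have IH2: "w H s c = w H' s c" for c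
      proof (rule less.IH)
        show "s < t" unfolding s_def using Suc True by simp
        fix r assume "r + d i < s"
        then have "r + d i < t" using Suc True unfolding s_def by simp
        then show "H r = H' r" by (rule less.prems)
      qed
      have Hs: "H s = H' s" using Suc True unfolding s_def by (intro less.prems) simp
      have L: "lh H s c = lh H' s c" for c
        unfolding lh_def pp_def WW_def ll_def using IH2 Hs by simp
      have e1: "w H (Suc t') a = w H t' a * exp (\<eta> * (1 - lh H s a))"
        unfolding s_def by (rule w_Suc_upd[OF True])
      have e2: "w H' (Suc t') a = w H' t' a * exp (\<eta> * (1 - lh H' s a))"
        unfolding s_def by (rule w_Suc_upd[OF True])
      show ?thesis unfolding Suc e1 e2 IH1 L ..
    next
      case False
      then show ?thesis unfolding Suc using IH1 by (simp add: w_Suc_no)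
    qed
  qed
qed

lemma WW_dep: "(\<And>r. r + d i < t \<Longrightarrow> H r = H' r) \<Longrightarrow> WW H t = WW H' t"
proof -
  assume h: "\<And>r. r + d i < t \<Longrightarrow> H r = H' r"
  show ?thesis unfolding WW_def using w_dep[OF h] by simp
qed

lemma pp_dep: "(\<And>r. r + d i < t \<Longrightarrow> H r = H' r) \<Longrightarrow> pp H t a = pp H' t a"
proof -
  assume h: "\<And>r. r + d i < t \<Longrightarrow> H r = H' r"
  show ?thesis unfolding pp_def using w_dep[OF h] WW_dep[OF h] by simp
qed

end


lemma exp_neg_bound: "(v::real) \<ge> 0 \<Longrightarrow> exp (- v) \<le> 1 - v + v^2"
proof -
  assume v: "v \<ge> 0"
  have e: "1 + v \<le> exp v" by simp
  have "exp (- v) = 1 / exp v" by (simp add: exp_minus field_simps)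
  also have "\<dots> \<le> 1 / (1 + v)" using v e by (intro divide_left_mono) auto
  also have "\<dots> \<le> 1 - v + v^2"
  proof -
    have "1 \<le> (1 - v + v^2) * (1 + v)" using v by (simp add: algebra_simps power2_eq_square power3_eq_cube)
    then show ?thesis using v by (simp add: divide_le_eq)
  qed
  finally show ?thesis .
qed

context
  fixes V :: "nat \<Rightarrow> nat set" and Nb :: "nat \<Rightarrow> nat set" and d :: "nat \<Rightarrow> nat" and T :: nat
    and f :: "nat \<Rightarrow> (nat \<times> nat) set \<Rightarrow> real" and M :: real and i :: nat
begin

abbreviation "w' \<equiv> dog_w V Nb d T f M i"
abbreviation "\<eta>' \<equiv> dog_eta V d T i"
abbreviation "pp' \<equiv> pp V Nb d T f M i"
abbreviation "WW' \<equiv> WW V Nb d T f M i"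
abbreviation "ll' \<equiv> ll Nb f M i"
abbreviation "lh' \<equiv> lh V Nb d T f M i"

lemmas pp_pos_ = pp_pos[where V=V and Nb=Nb and d=d and T=T and f=f and M=M and i=i]
lemmas WW_pos_ = WW_pos[where V=V and Nb=Nb and d=d and T=T and f=f and M=M and i=i]
lemmas w_pos_ = w_pos[where V=V and Nb=Nb and d=d and T=T and f=f and M=M and i=i]
lemmas w_small_ = w_small[where V=V and Nb=Nb and d=d and T=T and f=f and M=M and i=i]
lemmas w_Suc_no_ = w_Suc_no[where V=V and Nb=Nb and d=d and T=T and f=f and M=M and i=i]
lemmas w_Suc_upd_ = w_Suc_upd[where V=V and Nb=Nb and d=d and T=T and f=f and M=M and i=i]
lemmas w_dep_ = w_dep[where V=V and Nb=Nb and d=d and T=T and f=f and M=M and i=i]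
lemmas pp_dep_ = pp_dep[where V=V and Nb=Nb and d=d and T=T and f=f and M=M and i=i]
lemmas pp_sum_ = pp_sum[where V=V and Nb=Nb and d=d and T=T and f=f and M=M and i=i]
lemmas WW_dep_ = WW_dep[where V=V and Nb=Nb and d=d and T=T and f=f and M=M and i=i]

definition "pvalid H \<longleftrightarrow> finite (V i) \<and> V i \<noteq> {} \<and>
   (\<forall>s\<in>{1..T}. H s i \<in> V i \<and> (\<forall>b\<in>V i. 0 \<le> ll' H s b \<and> ll' H s b \<le> 1))"

lemma one_step:
  assumes pv: "pvalid H" and e0: "0 \<le> \<eta>'" and e1: "\<eta>' * (d i + 1) \<le> 1/4"
    and t: "d i + 1 \<le> t" and sT: "t - d i \<le> T"
    and rat: "pp' H t (H (t - d i) i) \<le> 2 * pp' H (t - d i) (H (t - d i) i)"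
  shows "\<And>a. pp' H (Suc t) a \<le> pp' H t a / (1 - 2 * \<eta>')"
    "\<And>a. pp' H (Suc t) a \<ge> pp' H t a - (if a = H (t - d i) i then 2 * \<eta>' else 0)"
    "ln (WW' H (Suc t)) - ln (WW' H t) \<le> \<eta>' - \<eta>' * pp' H t (H (t - d i) i) * ll' H (t - d i) (H (t - d i) i) / pp' H (t - d i) (H (t - d i) i)
        + 2 * \<eta>'^2 * ll' H (t - d i) (H (t - d i) i) / pp' H (t - d i) (H (t - d i) i)"
proof -
  define s where "s = t - d i"
  define b where "b = H s i"
  have finV: "finite (V i)" and neV: "V i \<noteq> {}" using pv unfolding pvalid_def by auto
  have s1: "s \<in> {1..T}" using t sT unfolding s_def by auto
  have bV: "b \<in> V i" and l0: "0 \<le> ll' H s b" and l1: "ll' H s b \<le> 1"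
    using pv s1 unfolding pvalid_def b_def by auto
  define x where "x = pp' H t b"
  define y where "y = pp' H s b"
  define l where "l = ll' H s b"
  define v where "v = \<eta>' * l / y"
  note l0 = l0[folded l_def] and l1 = l1[folded l_def]
  have x0: "x > 0" unfolding x_def using pp_pos_ finV neV by auto
  have y0: "y > 0" unfolding y_def using pp_pos_ finV neV by auto
  have xy: "x \<le> 2 * y" using rat unfolding x_def y_def b_def s_def by simp
  have v0: "v \<ge> 0" unfolding v_def using e0 l0 y0 by auto
  have "\<eta>' \<le> \<eta>' * (d i + 1)" using e0 by (simp add: algebra_simps)
  then have e2: "2 * \<eta>' \<le> 1/2" using e1 by linarith
  have xv: "x * v \<le> 2 * \<eta>'"
  proof -
    have "x * v = \<eta>' * l * (x / y)" unfolding v_def by (simp add: field_simps)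
    also have "\<dots> \<le> \<eta>' * l * 2" using xy y0 e0 l0 by (intro mult_left_mono) (auto simp: divide_le_eq)
    also have "\<dots> \<le> \<eta>' * 1 * 2" using l1 e0 by (intro mult_right_mono mult_left_mono) auto
    finally show ?thesis by simp
  qed
  have ev: "1 - v \<le> exp (- v)" using exp_ge_add_one_self[of "-v"] by simp
  define z where "z = x * (1 - exp (- v))"
  have z0: "0 \<le> z" unfolding z_def using x0 v0 by auto
  have zxv: "z \<le> x * v" unfolding z_def using x0 by (intro mult_left_mono) (use ev in auto)
  have zlow: "z \<ge> x * v - x * v^2"
  proof -
    have "1 - exp (- v) \<ge> v - v^2" using exp_neg_bound[OF v0] by simp
    then have "x * (1 - exp (- v)) \<ge> x * (v - v^2)" using x0 by (intro mult_left_mono) auto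
    then show ?thesis unfolding z_def by (simp add: algebra_simps)
  qed
  have z2: "z \<le> 2 * \<eta>'" using zxv xv by simp
  have lhb: "lh' H s a = (if a = b then l / y else 0)" for a
    unfolding lh_def b_def l_def y_def by auto
  have wS: "w' H (Suc t) a = w' H t a * exp \<eta>' * (if a = b then exp (- v) else 1)" for a
  proof -
    have "w' H (Suc t) a = w' H t a * exp (\<eta>' * (1 - lh' H s a))"
      unfolding s_def by (rule w_Suc_upd_[OF t])
    also have "\<eta>' * (1 - lh' H s a) = \<eta>' + (if a = b then - v else 0)"
      unfolding lhb v_def by (simp add: algebra_simps)
    finally show ?thesis by (simp add: exp_add)
  qed
  have WWt: "WW' H t > 0" using WW_pos_ finV neV by auto
  have wb: "w' H t b = x * WW' H t" unfolding x_def pp_def using WWt by simp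
  have WWS: "WW' H (Suc t) = exp \<eta>' * WW' H t * (1 - z)"
  proof -
    have "WW' H (Suc t) = (\<Sum>a\<in>V i. w' H t a * exp \<eta>' * (if a = b then exp (- v) else 1))"
      unfolding WW_def using wS by simp
    also have "\<dots> = (\<Sum>a\<in>V i. w' H t a * exp \<eta>') - w' H t b * exp \<eta>' * (1 - exp (- v))"
    proof -
      have "(\<Sum>a\<in>V i. w' H t a * exp \<eta>' * (if a = b then exp (- v) else 1))
          = (\<Sum>a\<in>V i. w' H t a * exp \<eta>' - (if a = b then w' H t a * exp \<eta>' * (1 - exp (- v)) else 0))"
        by (intro sum.cong) (auto simp: algebra_simps)
      also have "\<dots> = (\<Sum>a\<in>V i. w' H t a * exp \<eta>') - w' H t b * exp \<eta>' * (1 - exp (- v))"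
        using finV bV by (simp add: sum_subtractf)
      finally show ?thesis .
    qed
    also have "\<dots> = WW' H t * exp \<eta>' - x * WW' H t * exp \<eta>' * (1 - exp (- v))"
      unfolding WW_def wb[unfolded WW_def] by (simp add: sum_distrib_right)
    also have "\<dots> = exp \<eta>' * WW' H t * (1 - z)"
      unfolding z_def by (simp add: algebra_simps)
    finally show ?thesis .
  qed
  have z1: "1 - z > 0" using z2 e2 by simp
  have WWS_pos: "WW' H (Suc t) > 0" using WW_pos_ finV neV by auto
  show "pp' H (Suc t) a \<le> pp' H t a / (1 - 2 * \<eta>')" for a
  proof -
    have wle: "w' H (Suc t) a \<le> w' H t a * exp \<eta>'"
      unfolding wS using w_pos_[of H t a] v0 by (auto simp: mult_le_cancel_left1)
    have "pp' H (Suc t) a = w' H (Suc t) a / (exp \<eta>' * WW' H t * (1 - z))" unfolding pp_def WWS ..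
    also have "\<dots> \<le> w' H t a * exp \<eta>' / (exp \<eta>' * WW' H t * (1 - z))"
      using wle WWt z1 by (intro divide_right_mono) auto
    also have "\<dots> = pp' H t a / (1 - z)" unfolding pp_def by simp
    also have "\<dots> \<le> pp' H t a / (1 - 2 * \<eta>')"
      using z2 z1 e2 pp_pos_[OF finV neV, of H t a] by (intro divide_left_mono) auto
    finally show ?thesis .
  qed
  have WWup: "WW' H (Suc t) \<le> exp \<eta>' * WW' H t"
    unfolding WWS using z0 WWt by (simp add: mult_le_cancel_left1)
  show "pp' H (Suc t) a \<ge> pp' H t a - (if a = H (t - d i) i then 2 * \<eta>' else 0)" for a
  proof -
    have "pp' H t a * (if a = b then exp (- v) else 1) = w' H t a * exp \<eta>' * (if a = b then exp (- v) else 1) / (exp \<eta>' * WW' H t)"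
      unfolding pp_def by simp
    also have "\<dots> \<le> w' H (Suc t) a / WW' H (Suc t)"
      unfolding wS[symmetric] using WWup WWS_pos w_pos_[of H "Suc t" a]
      by (intro divide_left_mono) auto
    finally have le: "pp' H t a * (if a = b then exp (- v) else 1) \<le> pp' H (Suc t) a" unfolding pp_def .
    show ?thesis
    proof (cases "a = b")
      case True
      have "pp' H t a - 2 * \<eta>' \<le> x * (1 - v)" using True xv unfolding x_def by (simp add: algebra_simps)
      also have "\<dots> \<le> x * exp (- v)" using x0 by (intro mult_left_mono) (use ev in auto)
      also have "\<dots> \<le> pp' H (Suc t) a" using le True unfolding x_def by simp
      finally show ?thesis using True unfolding b_def s_def by simp
    next
      case False
      then show ?thesis using le unfolding b_def s_def by simp
    qed
  qed
  show "ln (WW' H (Suc t)) - ln (WW' H t) \<le> \<eta>' - \<eta>' * pp' H t (H (t - d i) i) * ll' H (t - d i) (H (t - d i) i) / pp' H (t - d i) (H (t - d i) i)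
        + 2 * \<eta>'^2 * ll' H (t - d i) (H (t - d i) i) / pp' H (t - d i) (H (t - d i) i)"
  proof -
    have "ln (WW' H (Suc t)) = \<eta>' + ln (WW' H t) + ln (1 - z)"
      unfolding WWS using WWt z1 by (simp add: ln_mult)
    moreover have "ln (1 - z) \<le> - z" using z1 ln_le_minus_one[of "1 - z"] by simp
    moreover have "x * v^2 \<le> 2 * \<eta>'^2 * l / y"
    proof -
      have "x * v^2 = \<eta>'^2 * l^2 / y * (x / y)" unfolding v_def by (simp add: field_simps power2_eq_square)
      also have "\<dots> \<le> \<eta>'^2 * l / y * 2"
      proof (rule mult_mono)
        show "\<eta>'^2 * l^2 / y \<le> \<eta>'^2 * l / y"
          using l0 l1 y0 by (intro divide_right_mono mult_left_mono) (auto simp: power2_eq_square intro: mult_left_le)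
        show "x / y \<le> 2" using xy y0 by (simp add: divide_le_eq)
      qed (use l0 y0 x0 in auto)
      finally show ?thesis by (simp add: mult.commute mult.left_commute)
    qed
    moreover have "x * v = \<eta>' * x * l / y" unfolding v_def by simp
    ultimately show ?thesis using zlow unfolding x_def y_def l_def b_def s_def by linarith
  qed
qed


lemma pp_Suc_no: "\<not> d i + 1 \<le> t \<Longrightarrow> pp' H (Suc t) a = pp' H t a"
  unfolding pp_def WW_def using w_Suc_no_[of t H] by simp

lemma chain:
  assumes q: "q \<ge> 0" and st: "\<And>j a. s \<le> j \<Longrightarrow> j < s + k \<Longrightarrow> pp' H (Suc j) a \<le> q * pp' H j a"
  shows "pp' H (s + k) a \<le> q ^ k * pp' H s a"
  using st
proof (induction k)
  case 0 then show ?case by simp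
next
  case (Suc k)
  have "pp' H (s + Suc k) a = pp' H (Suc (s + k)) a" by simp
  also have "\<dots> \<le> q * pp' H (s + k) a" using Suc.prems by simp
  also have "\<dots> \<le> q * (q ^ k * pp' H s a)" using Suc q by (intro mult_left_mono) auto
  finally show ?case by simp
qed

lemma qpow:
  assumes e0: "0 \<le> \<eta>'" and e1: "\<eta>' * (d i + 1) \<le> 1/4"
  shows "(1 / (1 - 2 * \<eta>')) ^ d i \<le> 2" "1 - 2 * \<eta>' > 0" "1 / (1 - 2 * \<eta>') \<ge> 1"
proof -
  have "\<eta>' \<le> \<eta>' * (d i + 1)" using e0 by (simp add: algebra_simps)
  then have e2: "2 * \<eta>' \<le> 1/2" using e1 by linarith
  show p: "1 - 2 * \<eta>' > 0" using e2 by simp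
  show "1 / (1 - 2 * \<eta>') \<ge> 1" using e0 p by simp
  have "1 + real (d i) * (- 2 * \<eta>') \<le> (1 + (- 2 * \<eta>')) ^ d i"
    using e2 by (intro Bernoulli_inequality) simp
  moreover have "1 + real (d i) * (- 2 * \<eta>') \<ge> 1/2"
  proof -
    have "\<eta>' + real (d i) * \<eta>' \<le> 1/4" using e1 by (simp add: algebra_simps)
    then show ?thesis using e0 by linarith
  qed
  ultimately have b: "(1 - 2 * \<eta>') ^ d i \<ge> 1/2" by simp
  have "(1 / (1 - 2 * \<eta>')) ^ d i = 1 / (1 - 2 * \<eta>') ^ d i" by (simp add: power_one_over)
  also have "\<dots> \<le> 1 / (1/2)" using b by (intro divide_left_mono) auto
  finally show "(1 / (1 - 2 * \<eta>')) ^ d i \<le> 2" by simp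
qed

lemma ratio_all:
  assumes pv: "pvalid H" and e0: "0 \<le> \<eta>'" and e1: "\<eta>' * (d i + 1) \<le> 1/4"
  shows "t \<le> T + d i \<Longrightarrow> pp' H (Suc t) a \<le> (1 / (1 - 2 * \<eta>')) * pp' H t a"
proof (induction t arbitrary: a rule: less_induct)
  case (less t)
  define q where "q = 1 / (1 - 2 * \<eta>')"
  have q1: "q \<ge> 1" and qd: "q ^ d i \<le> 2" and p: "1 - 2 * \<eta>' > 0" using qpow[OF e0 e1] unfolding q_def by auto
  have finV: "finite (V i)" and neV: "V i \<noteq> {}" using pv unfolding pvalid_def by auto
  show ?case
  proof (cases "d i + 1 \<le> t")
    case False
    have "pp' H t a \<le> q * pp' H t a" using q1 pp_pos_[OF finV neV, of H t a]
      by (simp add: mult_le_cancel_right1)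
    then show ?thesis using pp_Suc_no[OF False] q_def by simp
  next
    case True
    define s where "s = t - d i"
    define b where "b = H s i"
    have st: "s + d i = t" unfolding s_def using True by simp
    have "pp' H (s + d i) b \<le> q ^ d i * pp' H s b"
    proof (rule chain)
      show "q \<ge> 0" using q1 by simp
      fix j c assume j: "s \<le> j" "j < s + d i"
      then show "pp' H (Suc j) c \<le> q * pp' H j c" unfolding q_def using less.prems st
        by (intro less.IH) auto
    qed
    also have "\<dots> \<le> 2 * pp' H s b" using qd pp_pos_[OF finV neV, of H s b]
      by (intro mult_right_mono) auto
    finally have rat: "pp' H t b \<le> 2 * pp' H s b" using st by simp
    have "pp' H (Suc t) a \<le> pp' H t a / (1 - 2 * \<eta>')"
      using rat less.prems True unfolding s_def b_def
      by (intro one_step(1)[OF pv e0 e1 True]) auto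
    then show ?thesis by simp
  qed
qed

lemma ratio_window:
  assumes pv: "pvalid H" and e0: "0 \<le> \<eta>'" and e1: "\<eta>' * (d i + 1) \<le> 1/4" and s: "s \<le> T"
  shows "pp' H (s + d i) b \<le> 2 * pp' H s b"
proof -
  define q where "q = 1 / (1 - 2 * \<eta>')"
  have q1: "q \<ge> 1" and qd: "q ^ d i \<le> 2" using qpow[OF e0 e1] unfolding q_def by auto
  have finV: "finite (V i)" and neV: "V i \<noteq> {}" using pv unfolding pvalid_def by auto
  have "pp' H (s + d i) b \<le> q ^ d i * pp' H s b"
  proof (rule chain)
    show "q \<ge> 0" using q1 by simp
    fix j c assume j: "s \<le> j" "j < s + d i"
    then show "pp' H (Suc j) c \<le> q * pp' H j c" unfolding q_def using s
      by (intro ratio_all[OF pv e0 e1]) auto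
  qed
  also have "\<dots> \<le> 2 * pp' H s b" using qd pp_pos_[OF finV neV, of H s b]
    by (intro mult_right_mono) auto
  finally show ?thesis .
qed

lemma drift_step:
  assumes pv: "pvalid H" and e0: "0 \<le> \<eta>'" and e1: "\<eta>' * (d i + 1) \<le> 1/4" and t: "t < T + d i"
    and L: "\<And>b. b \<in> V i \<Longrightarrow> 0 \<le> L b \<and> L b \<le> 1"
  shows "(\<Sum>b\<in>V i. pp' H (Suc t) b * L b) \<ge> (\<Sum>b\<in>V i. pp' H t b * L b) - 2 * \<eta>'"
proof (cases "d i + 1 \<le> t")
  case False
  then show ?thesis using pp_Suc_no[OF False] e0 by simp
next
  case True
  have finV: "finite (V i)" using pv unfolding pvalid_def by auto
  define s where "s = t - d i"
  define \<beta> where "\<beta> = H s i"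
  have st: "s + d i = t" unfolding s_def using True by simp
  have rat: "pp' H t \<beta> \<le> 2 * pp' H s \<beta>" using ratio_window[OF pv e0 e1, of s \<beta>] st t by simp
  have low: "pp' H (Suc t) b \<ge> pp' H t b - (if b = \<beta> then 2 * \<eta>' else 0)" for b
    using one_step(2)[OF pv e0 e1 True, of b] rat t unfolding s_def \<beta>_def by auto
  have "(\<Sum>b\<in>V i. pp' H t b * L b) - (\<Sum>b\<in>V i. pp' H (Suc t) b * L b)
      = (\<Sum>b\<in>V i. (pp' H t b - pp' H (Suc t) b) * L b)" by (simp add: sum_subtractf algebra_simps)
  also have "\<dots> \<le> (\<Sum>b\<in>V i. (if b = \<beta> then 2 * \<eta>' else 0) * L b)"
    using low L by (intro sum_mono mult_right_mono) (auto simp: algebra_simps)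
  also have "\<dots> = (if \<beta> \<in> V i then 2 * \<eta>' * L \<beta> else 0)"
    using finV by (simp add: if_distrib[of "\<lambda>x. x * _"] sum.delta cong: if_cong)
  also have "\<dots> \<le> 2 * \<eta>'" using L e0 by (auto intro: mult_left_le)
  finally show ?thesis by simp
qed

lemma drift:
  assumes pv: "pvalid H" and e0: "0 \<le> \<eta>'" and e1: "\<eta>' * (d i + 1) \<le> 1/4" and s: "s \<le> T"
    and L: "\<And>b. b \<in> V i \<Longrightarrow> 0 \<le> L b \<and> L b \<le> 1"
  shows "(\<Sum>b\<in>V i. pp' H (s + d i) b * L b) \<ge> (\<Sum>b\<in>V i. pp' H s b * L b) - 2 * \<eta>' * d i"
proof -
  have "k \<le> d i \<Longrightarrow> (\<Sum>b\<in>V i. pp' H (s + k) b * L b) \<ge> (\<Sum>b\<in>V i. pp' H s b * L b) - 2 * \<eta>' * k" for k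
  proof (induction k)
    case 0 then show ?case by simp
  next
    case (Suc k)
    have "(\<Sum>b\<in>V i. pp' H (Suc (s + k)) b * L b) \<ge> (\<Sum>b\<in>V i. pp' H (s + k) b * L b) - 2 * \<eta>'"
      using Suc.prems s by (intro drift_step[OF pv e0 e1 _ L]) auto
    then show ?case using Suc by (simp add: algebra_simps)
  qed
  then show ?thesis by simp
qed


lemma lnw:
  "ln (w' H (n + d i + 1) a) = (\<Sum>r\<in>{1..n}. \<eta>' * (1 - lh' H r a))"
proof (induction n)
  case 0 then show ?case using w_small_[of "d i + 1" H a] by simp
next
  case (Suc n)
  have "w' H (Suc n + d i + 1) a = w' H (Suc (n + d i + 1)) a" by simp
  also have "\<dots> = w' H (n + d i + 1) a * exp (\<eta>' * (1 - lh' H (n + d i + 1 - d i) a))"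
    by (rule w_Suc_upd_) simp
  finally have e: "w' H (Suc n + d i + 1) a = w' H (n + d i + 1) a * exp (\<eta>' * (1 - lh' H (Suc n) a))"
    by simp
  show ?case unfolding e using w_pos_[of H "n + d i + 1" a] Suc by (simp add: ln_mult)
qed

lemma potential:
  assumes pv: "pvalid H" and ep: "0 < \<eta>'" and e1: "\<eta>' * (d i + 1) \<le> 1/4" and aV: "a \<in> V i"
  shows "(\<Sum>s\<in>{1..T}. pp' H (s + d i) (H s i) * ll' H s (H s i) / pp' H s (H s i) - lh' H s a)
     \<le> ln (card (V i)) / \<eta>' + 2 * \<eta>' * (\<Sum>s\<in>{1..T}. ll' H s (H s i) / pp' H s (H s i))"
proof -
  have e0: "0 \<le> \<eta>'" using ep by simp
  have finV: "finite (V i)" and neV: "V i \<noteq> {}" using pv unfolding pvalid_def by auto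
  define A where "A s = pp' H (s + d i) (H s i) * ll' H s (H s i) / pp' H s (H s i)" for s
  define C where "C s = ll' H s (H s i) / pp' H s (H s i)" for s
  define g where "g s = ln (WW' H (s + d i))" for s
  have WW1: "WW' H (1 + d i) = real (card (V i))"
    unfolding WW_def using w_small_[of "1 + d i" H] by simp
  have tele: "g (Suc T) - g 1 = (\<Sum>s\<in>{1..T}. g (Suc s) - g s)"
    by (rule sum_Suc_diff[symmetric]) simp
  have step: "g (Suc s) - g s \<le> \<eta>' - \<eta>' * A s + 2 * \<eta>'^2 * C s" if s: "s \<in> {1..T}" for s
  proof -
    have t: "d i + 1 \<le> s + d i" using s by simp
    have rat: "pp' H (s + d i) (H (s + d i - d i) i) \<le> 2 * pp' H (s + d i - d i) (H (s + d i - d i) i)"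
      using ratio_window[OF pv e0 e1, of s "H s i"] s by simp
    have "ln (WW' H (Suc (s + d i))) - ln (WW' H (s + d i)) \<le> \<eta>' - \<eta>' * pp' H (s + d i) (H (s + d i - d i) i) * ll' H (s + d i - d i) (H (s + d i - d i) i) / pp' H (s + d i - d i) (H (s + d i - d i) i)
        + 2 * \<eta>'^2 * ll' H (s + d i - d i) (H (s + d i - d i) i) / pp' H (s + d i - d i) (H (s + d i - d i) i)"
      using s by (intro one_step(3)[OF pv e0 e1 t _ rat]) auto
    then show ?thesis unfolding g_def A_def C_def by (simp add: algebra_simps)
  qed
  have lowb: "ln (w' H (T + d i + 1) a) \<le> g (Suc T)"
  proof -
    have "w' H (T + d i + 1) a \<le> WW' H (T + d i + 1)"
      unfolding WW_def using finV aV w_pos_ by (intro member_le_sum) (auto intro: less_imp_le)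
    then show ?thesis unfolding g_def using w_pos_[of H "T + d i + 1" a] by simp
  qed
  have "(\<Sum>r\<in>{1..T}. \<eta>' * (1 - lh' H r a)) \<le> g 1 + (\<Sum>s\<in>{1..T}. \<eta>' - \<eta>' * A s + 2 * \<eta>'^2 * C s)"
    using lowb tele sum_mono[of "{1..T}" "\<lambda>s. g (Suc s) - g s" "\<lambda>s. \<eta>' - \<eta>' * A s + 2 * \<eta>'^2 * C s"] step
      lnw[of H T a] by simp
  then have "\<eta>' * (\<Sum>s\<in>{1..T}. A s - lh' H s a) \<le> g 1 + \<eta>' * (2 * \<eta>' * (\<Sum>s\<in>{1..T}. C s))"
    by (simp add: sum_subtractf sum.distrib sum_distrib_left algebra_simps power2_eq_square)
  then have "(\<Sum>s\<in>{1..T}. A s - lh' H s a) \<le> g 1 / \<eta>' + 2 * \<eta>' * (\<Sum>s\<in>{1..T}. C s)"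
    using ep by (simp add: field_simps)
  moreover have "g 1 = ln (card (V i))" unfolding g_def using WW1 by simp
  ultimately show ?thesis unfolding A_def C_def by simp
qed

end


abbreviation EE :: "'a pmf \<Rightarrow> ('a \<Rightarrow> real) \<Rightarrow> real" where
  "EE p h \<equiv> measure_pmf.expectation p h"

lemma exp_bind:
  assumes "finite (set_pmf p)" "\<And>x. x \<in> set_pmf p \<Longrightarrow> finite (set_pmf (F x))"
  shows "EE (bind_pmf p F) h = EE p (\<lambda>x. EE (F x) h)"
proof -
  have "EE (bind_pmf p F) h = (\<Sum>a\<in>set_pmf p. pmf p a *\<^sub>R EE (F a) h)"
    using assms by (intro pmf_expectation_bind) auto
  also have "\<dots> = EE p (\<lambda>x. EE (F x) h)"
    using assms by (intro integral_measure_pmf[symmetric]) auto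
  finally show ?thesis .
qed

lemma exp_pair:
  assumes "finite (set_pmf A)" "finite (set_pmf B)"
  shows "EE (pair_pmf A B) F = EE A (\<lambda>y. EE B (\<lambda>h. F (y, h)))"
  unfolding pair_pmf_def using assms
  by (simp add: exp_bind)

lemma exp_const[simp]: "EE p (\<lambda>_. c) = c"
  by simp

lemma exp_finite_sum:
  assumes "finite (set_pmf p)"
  shows "EE p (\<lambda>x. \<Sum>b\<in>S. F b x) = (\<Sum>b\<in>S. EE p (F b))"
  by (subst Bochner_Integration.integral_sum) (auto simp: integrable_measure_pmf_finite assms)

lemma exp_mono:
  assumes "finite (set_pmf p)" "\<And>x. x \<in> set_pmf p \<Longrightarrow> F x \<le> G x"
  shows "EE p F \<le> EE p G"
  using assms by (intro integral_mono_AE integrable_measure_pmf_finite AE_pmfI)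

lemma exp_cong:
  assumes "\<And>x. x \<in> set_pmf p \<Longrightarrow> F x = G x"
  shows "EE p F = EE p G"
  using assms by (intro integral_cong_AE) (auto intro: AE_pmfI)

lemma exp_diff:
  assumes "finite (set_pmf p)"
  shows "EE p (\<lambda>x. F x - G x) = EE p F - EE p G"
  using assms by (simp add: integrable_measure_pmf_finite)

lemma exp_add:
  assumes "finite (set_pmf p)"
  shows "EE p (\<lambda>x. F x + G x) = EE p F + EE p G"
  using assms by (simp add: integrable_measure_pmf_finite)

lemma exp_cmult: "EE p (\<lambda>x. c * F x) = c * EE p F"
  by simp

lemma exp_resample_generic:
  assumes finN: "finite N" and iN: "i \<in> N" and finS: "\<And>j. j \<in> N \<Longrightarrow> finite (set_pmf (P j))"
    and SV: "set_pmf (P i) \<subseteq> S" and finS': "finite S"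
  shows "EE (Pi_pmf N dflt P) g = EE (Pi_pmf N dflt P) (\<lambda>A. \<Sum>b\<in>S. pmf (P i) b * g (A(i := b)))"
proof -
  define N' where "N' = N - {i}"
  have NN: "N = insert i N'" "i \<notin> N'" "finite N'" unfolding N'_def using iN finN by auto
  have fin': "finite (set_pmf (Pi_pmf N' dflt P))"
    using NN finS by (intro finite_subset[OF set_Pi_pmf_subset'] finite_PiE_dflt) auto
  have fini: "finite (set_pmf (P i))" using finS iN by auto
  have dec: "Pi_pmf N dflt P = map_pmf (\<lambda>(y, h). h(i := y)) (pair_pmf (P i) (Pi_pmf N' dflt P))"
    unfolding NN(1) by (rule Pi_pmf_insert[OF NN(3) NN(2)])
  have "EE (Pi_pmf N dflt P) g = EE (P i) (\<lambda>y. EE (Pi_pmf N' dflt P) (\<lambda>h. g (h(i := y))))"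
    unfolding dec using fin' fini by (simp add: exp_pair case_prod_beta)
  also have "\<dots> = (\<Sum>y\<in>S. EE (Pi_pmf N' dflt P) (\<lambda>h. g (h(i := y))) * pmf (P i) y)"
    using SV finS' by (intro integral_measure_pmf_real) auto
  finally have L: "EE (Pi_pmf N dflt P) g = (\<Sum>y\<in>S. pmf (P i) y * EE (Pi_pmf N' dflt P) (\<lambda>h. g (h(i := y))))"
    by (simp add: mult.commute)
  have "EE (Pi_pmf N dflt P) (\<lambda>A. \<Sum>b\<in>S. pmf (P i) b * g (A(i := b)))
      = EE (P i) (\<lambda>y. EE (Pi_pmf N' dflt P) (\<lambda>h. \<Sum>b\<in>S. pmf (P i) b * g (h(i := b))))"
    unfolding dec using fin' fini by (simp add: exp_pair case_prod_beta)
  also have "\<dots> = EE (Pi_pmf N' dflt P) (\<lambda>h. \<Sum>b\<in>S. pmf (P i) b * g (h(i := b)))"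
    by simp
  also have "\<dots> = (\<Sum>b\<in>S. EE (Pi_pmf N' dflt P) (\<lambda>h. pmf (P i) b * g (h(i := b))))"
    using fin' by (rule exp_finite_sum)
  also have "\<dots> = (\<Sum>b\<in>S. pmf (P i) b * EE (Pi_pmf N' dflt P) (\<lambda>h. g (h(i := b))))"
    by simp
  finally show ?thesis using L by simp
qed


definition "bas N V \<longleftrightarrow> finite N \<and> (\<forall>j\<in>N. finite (V j) \<and> V j \<noteq> {})"

lemma dog_p_pmf:
  assumes "finite (V j)" "V j \<noteq> {}"
  shows "pmf (dog_p V Nb d T f M j H t) b = (if b \<in> V j then pp V Nb d T f M j H t b else 0)"
proof -
  define g where "g b = (if b \<in> V j then dog_w V Nb d T f M j H t b / (\<Sum>c\<in>V j. dog_w V Nb d T f M j H t c) else 0)" for b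
  have gp: "g b = (if b \<in> V j then pp V Nb d T f M j H t b else 0)" for b
    unfolding g_def pp_def WW_def by simp
  have g0: "0 \<le> g x" for x unfolding gp using pp_pos[where V=V and i=j, OF assms] by (auto intro: less_imp_le)
  have "(\<integral>\<^sup>+x. ennreal (g x) \<partial>count_space UNIV) = (\<integral>\<^sup>+x. ennreal (g x) * indicator (V j) x \<partial>count_space UNIV)"
    by (intro nn_integral_cong) (auto simp: gp split: split_indicator)
  also have "\<dots> = (\<integral>\<^sup>+x. ennreal (g x) \<partial>count_space (V j))"
    by (rule nn_integral_count_space_indicator[symmetric]) simp
  also have "\<dots> = (\<Sum>x\<in>V j. ennreal (g x))" by (rule nn_integral_count_space_finite[OF assms(1)])
  also have "\<dots> = ennreal (\<Sum>x\<in>V j. g x)" using g0 by simp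
  also have "(\<Sum>x\<in>V j. g x) = 1" unfolding gp using pp_sum[where V=V and i=j, OF assms] by simp
  finally have int1: "(\<integral>\<^sup>+x. ennreal (g x) \<partial>count_space UNIV) = 1" by simp
  have "pmf (dog_p V Nb d T f M j H t) b = g b"
    unfolding dog_p_def g_def[symmetric] using g0 int1 by (rule pmf_embed_pmf)
  then show ?thesis unfolding gp .
qed

lemma dog_p_set:
  assumes "finite (V j)" "V j \<noteq> {}"
  shows "set_pmf (dog_p V Nb d T f M j H t) = V j"
  using dog_p_pmf[where V=V and j=j, OF assms] pp_pos[where V=V and i=j, OF assms] unfolding set_pmf_eq
  by (auto simp: less_imp_neq[symmetric] split: if_splits)

context
  fixes N :: "nat set" and V :: "nat \<Rightarrow> nat set" and Nb :: "nat \<Rightarrow> nat set" and d :: "nat \<Rightarrow> nat"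
    and T :: nat and f :: "nat \<Rightarrow> (nat \<times> nat) set \<Rightarrow> real" and M :: real
begin

abbreviation "traj \<equiv> dog_traj N V Nb d T f M"
abbreviation "PP H t \<equiv> (\<lambda>j. dog_p V Nb d T f M j H t)"

lemma traj_Suc: "traj (Suc n) = bind_pmf (traj n) (\<lambda>H. map_pmf (\<lambda>A. H(Suc n := A)) (Pi_pmf N 0 (PP H (Suc n))))"
  by simp

lemma Pi_fin:
  assumes "bas N V"
  shows "finite (set_pmf (Pi_pmf N 0 (PP H t)))" "A \<in> set_pmf (Pi_pmf N 0 (PP H t)) \<Longrightarrow> j \<in> N \<Longrightarrow> A j \<in> V j"
proof -
  have fN: "finite N" using assms unfolding bas_def by auto
  have sV: "j \<in> N \<Longrightarrow> set_pmf (PP H t j) = V j" for j using assms unfolding bas_def by (intro dog_p_set[where V=V and j=j]) auto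
  show "finite (set_pmf (Pi_pmf N 0 (PP H t)))"
    using fN sV assms unfolding bas_def by (intro finite_subset[OF set_Pi_pmf_subset'] finite_PiE_dflt) auto
  assume A: "A \<in> set_pmf (Pi_pmf N 0 (PP H t))" and j: "j \<in> N"
  then have "A \<in> PiE_dflt N 0 (set_pmf \<circ> PP H t)" using set_Pi_pmf_subset'[OF fN, of 0 "PP H t"] by blast
  then show "A j \<in> V j" using j sV unfolding PiE_dflt_def by auto
qed

lemma traj_fin_valid:
  assumes "bas N V"
  shows "finite (set_pmf (traj n)) \<and> (\<forall>H\<in>set_pmf (traj n). \<forall>t\<in>{1..n}. \<forall>j\<in>N. H t j \<in> V j)"
proof (induction n)
  case 0 then show ?case by simp
next
  case (Suc n)
  have fin: "finite (set_pmf (traj (Suc n)))"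
    unfolding traj_Suc using Suc Pi_fin(1)[OF assms] by simp
  have "\<forall>H\<in>set_pmf (traj (Suc n)). \<forall>t\<in>{1..Suc n}. \<forall>j\<in>N. H t j \<in> V j"
  proof (intro ballI)
    fix H' t j assume H': "H' \<in> set_pmf (traj (Suc n))" and t: "t \<in> {1..Suc n}" and j: "j \<in> N"
    then obtain H A where H: "H \<in> set_pmf (traj n)" and A: "A \<in> set_pmf (Pi_pmf N 0 (PP H (Suc n)))"
      and HA: "H' = H(Suc n := A)" unfolding traj_Suc by auto
    show "H' t j \<in> V j"
    proof (cases "t = Suc n")
      case True then show ?thesis using HA Pi_fin(2)[OF assms A j] by simp
    next
      case False then show ?thesis using HA Suc H t j by auto
    qed
  qed
  then show ?case using fin by simp
qed

lemma exp_traj_ext: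
  assumes b: "bas N V" and dep: "\<And>H H'. (\<And>t. t \<le> n \<Longrightarrow> H t = H' t) \<Longrightarrow> \<Phi> H = \<Phi> H'"
  shows "n \<le> m \<Longrightarrow> EE (traj m) \<Phi> = EE (traj n) \<Phi>"
proof (induction m)
  case 0 then show ?case by simp
next
  case (Suc m)
  show ?case
  proof (cases "n = Suc m")
    case True then show ?thesis by simp
  next
    case False
    then have nm: "n \<le> m" using Suc by simp
    have "EE (traj (Suc m)) \<Phi> = EE (traj m) (\<lambda>H. EE (map_pmf (\<lambda>A. H(Suc m := A)) (Pi_pmf N 0 (PP H (Suc m)))) \<Phi>)"
      unfolding traj_Suc using traj_fin_valid[OF b] Pi_fin(1)[OF b] by (intro exp_bind) auto
    also have "\<dots> = EE (traj m) (\<lambda>H. EE (Pi_pmf N 0 (PP H (Suc m))) (\<lambda>A. \<Phi> H))"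
    proof -
      have "\<Phi> (H(Suc m := A)) = \<Phi> H" for H A using nm by (intro dep) auto
      then show ?thesis by simp
    qed
    also have "\<dots> = EE (traj m) \<Phi>" by simp
    finally show ?thesis using Suc.IH nm by simp
  qed
qed

lemma resample:
  assumes b: "bas N V" and iN: "i \<in> N" and s1: "1 \<le> s" and sT: "s \<le> T"
    and dep: "\<And>H H'. (\<And>t. t \<le> s \<Longrightarrow> H t = H' t) \<Longrightarrow> \<Phi> H = \<Phi> H'"
  shows "EE (traj T) \<Phi> = EE (traj T) (\<lambda>H. \<Sum>b\<in>V i. pp V Nb d T f M i H s b * \<Phi> (H(s := (H s)(i := b))))"
proof -
  define \<Psi> where "\<Psi> H = (\<Sum>b\<in>V i. pp V Nb d T f M i H s b * \<Phi> (H(s := (H s)(i := b))))" for H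
  have finV: "finite (V i)" "V i \<noteq> {}" using b iN unfolding bas_def by auto
  have depP: "\<Psi> H = \<Psi> H'" if h: "\<And>t. t \<le> s \<Longrightarrow> H t = H' t" for H H'
  proof -
    have "pp V Nb d T f M i H s c = pp V Nb d T f M i H' s c" for c
      by (rule pp_dep) (use h in auto)
    moreover have "\<Phi> (H(s := (H s)(i := c))) = \<Phi> (H'(s := (H' s)(i := c)))" for c
      by (rule dep) (use h in auto)
    ultimately show ?thesis unfolding \<Psi>_def by simp
  qed
  obtain s0 where s0: "s = Suc s0" using s1 by (cases s) auto
  have E1: "EE (traj T) \<Phi> = EE (traj s) \<Phi>" using exp_traj_ext[OF b dep sT] by simp
  have E2: "EE (traj T) \<Psi> = EE (traj s) \<Psi>" using exp_traj_ext[OF b depP sT] by simp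
  have fin0: "finite (set_pmf (traj s0))" using traj_fin_valid[OF b] by simp
  have "EE (traj s) \<Phi> = EE (traj s0) (\<lambda>H. EE (Pi_pmf N 0 (PP H s)) (\<lambda>A. \<Phi> (H(s := A))))"
    unfolding s0 traj_Suc using fin0 Pi_fin(1)[OF b] by (subst exp_bind) auto
  also have "\<dots> = EE (traj s0) (\<lambda>H. EE (Pi_pmf N 0 (PP H s)) (\<lambda>A. \<Psi> (H(s := A))))"
  proof (rule exp_cong)
    fix H
    have fN: "finite N" using b unfolding bas_def by auto
    have "EE (Pi_pmf N 0 (PP H s)) (\<lambda>A. \<Phi> (H(s := A)))
        = EE (Pi_pmf N 0 (PP H s)) (\<lambda>A. \<Sum>c\<in>V i. pmf (PP H s i) c * \<Phi> (H(s := A(i := c))))"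
    proof (rule exp_resample_generic[OF fN iN, where g="\<lambda>A. \<Phi> (H(s := A))"])
      fix j assume "j \<in> N"
      then have "finite (V j)" "V j \<noteq> {}" using b unfolding bas_def by auto
      then show "finite (set_pmf (PP H s j))" using dog_p_set[where V=V and j=j] by simp
    qed (use dog_p_set[where V=V and j=i, OF finV] finV in auto)
    also have "\<dots> = EE (Pi_pmf N 0 (PP H s)) (\<lambda>A. \<Psi> (H(s := A)))"
    proof (rule exp_cong)
      fix A
      have "pp V Nb d T f M i (H(s := A)) s c = pp V Nb d T f M i H s c" for c
        by (rule pp_dep) auto
      then show "(\<Sum>c\<in>V i. pmf (PP H s i) c * \<Phi> (H(s := A(i := c)))) = \<Psi> (H(s := A))"
        unfolding \<Psi>_def using dog_p_pmf[where V=V and j=i, OF finV] by simp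
    qed
    finally show "EE (Pi_pmf N 0 (PP H s)) (\<lambda>A. \<Phi> (H(s := A))) = EE (Pi_pmf N 0 (PP H s)) (\<lambda>A. \<Psi> (H(s := A)))" .
  qed
  also have "\<dots> = EE (traj s) \<Psi>"
    unfolding s0 traj_Suc using fin0 Pi_fin(1)[OF b] by (subst exp_bind) (auto simp: s0)
  finally show ?thesis using E1 E2 unfolding \<Psi>_def by simp
qed

end


lemma num_bound:
  fixes K d T Vb :: real
  assumes K: "K \<ge> 2" and d: "d \<ge> 0" and T: "T > 0" and Vb: "K + d \<le> Vb"
  defines "ee \<equiv> sqrt (ln K / ((K + d) * T))"
  shows "(ln K / ee + 2 * ee * T * (K + d)) / T \<le> 3 * ((1 + ln Vb) * sqrt (Vb / T))"
    "ee * (d + 1) \<le> (1 + ln Vb) * sqrt (Vb / T)" "ee > 0"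
proof -
  define L where "L = ln K"
  define Q where "Q = (K + d) * T"
  have L0: "L > 0" unfolding L_def using K by simp
  have Q0: "Q > 0" unfolding Q_def using K d T by simp
  have e: "ee = sqrt L / sqrt Q" unfolding ee_def L_def Q_def by (simp add: real_sqrt_divide)
  show ep: "ee > 0" unfolding e using L0 Q0 by simp
  have sL: "sqrt L * sqrt L = L" "sqrt Q * sqrt Q = Q" using L0 Q0 by auto
  have sL0: "sqrt L > 0" "sqrt Q > 0" using L0 Q0 by auto
  have t1: "L / ee = sqrt L * sqrt Q" unfolding e using sL sL0 by (simp add: field_simps)
  have t2: "ee * Q = sqrt L * sqrt Q" unfolding e using sL sL0 by (simp add: field_simps)
  have key: "sqrt (L * (K + d) / T) \<le> (1 + ln Vb) * sqrt (Vb / T)"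
  proof -
    have V1: "Vb \<ge> 1" "Vb > 0" using Vb K d by auto
    have lV: "ln Vb \<ge> 0" using V1 by simp
    have "L \<le> ln Vb" unfolding L_def using K Vb d by simp
    also have "ln Vb \<le> (1 + ln Vb)^2" using lV by (simp add: power2_eq_square algebra_simps)
    finally have "L \<le> (1 + ln Vb)^2" .
    then have "L * (K + d) \<le> (1 + ln Vb)^2 * Vb"
      using Vb L0 K d by (intro mult_mono) auto
    then have "L * (K + d) / T \<le> (1 + ln Vb)^2 * Vb / T" using T by (intro divide_right_mono) auto
    then have "sqrt (L * (K + d) / T) \<le> sqrt ((1 + ln Vb)^2 * Vb / T)" by simp
    also have "\<dots> = (1 + ln Vb) * sqrt (Vb / T)"
      using lV by (simp add: real_sqrt_mult real_sqrt_divide)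
    finally show ?thesis .
  qed
  have eq1: "ln K / ee + 2 * ee * T * (K + d) = 3 * (sqrt L * sqrt Q)"
    using t1 t2 unfolding L_def[symmetric] Q_def by (simp add: algebra_simps)
  have eq2: "sqrt L * sqrt Q / T = sqrt (L * (K + d) / T)"
  proof -
    have "sqrt L * sqrt Q / T = sqrt (L * Q) / sqrt (T * T)" using T by (simp add: real_sqrt_mult)
    also have "\<dots> = sqrt (L * Q / (T * T))" by (simp add: real_sqrt_divide)
    also have "L * Q / (T * T) = L * (K + d) / T" unfolding Q_def using T by (simp add: field_simps)
    finally show ?thesis .
  qed
  have "(ln K / ee + 2 * ee * T * (K + d)) / T = 3 * (sqrt L * sqrt Q / T)" unfolding eq1 by simp
  also have "\<dots> \<le> 3 * ((1 + ln Vb) * sqrt (Vb / T))" unfolding eq2 using key by simp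
  finally show "(ln K / ee + 2 * ee * T * (K + d)) / T \<le> 3 * ((1 + ln Vb) * sqrt (Vb / T))" .
  have "ee * (d + 1) = sqrt (L * (d + 1)^2 / Q)"
    unfolding ee_def L_def[symmetric] Q_def[symmetric] using d
    by (simp add: real_sqrt_mult real_sqrt_divide)
  also have "\<dots> \<le> sqrt (L * (K + d) / T)"
  proof -
    have "(d + 1)^2 \<le> (K + d)^2" using K d by (intro power_mono) auto
    then have "L * (d + 1)^2 \<le> L * (K + d)^2" using L0 by (intro mult_left_mono) auto
    then have "L * (d + 1)^2 / Q \<le> L * (K + d)^2 / Q" using Q0 by (intro divide_right_mono) auto
    also have "L * (K + d)^2 / Q = L * (K + d) / T"
    proof -
      have KD: "K + d \<noteq> 0" using K d by simp
      have "L * (K + d)^2 / Q = (L * (K + d) / T) * ((K + d) / (K + d))"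
        unfolding Q_def by (simp add: power2_eq_square)
      then show ?thesis using KD by simp
    qed
    finally show ?thesis by simp
  qed
  finally show "ee * (d + 1) \<le> (1 + ln Vb) * sqrt (Vb / T)" using key by simp
qed


context
  fixes N :: "nat set" and V :: "nat \<Rightarrow> nat set" and Nb :: "nat \<Rightarrow> nat set" and d :: "nat \<Rightarrow> nat"
    and T :: nat and f :: "nat \<Rightarrow> (nat \<times> nat) set \<Rightarrow> real" and M :: real and i :: nat and a :: nat
  assumes b: "bas N V" and iN: "i \<in> N" and Mp: "M > 0" and aV: "a \<in> V i" and Nbi: "Nb i \<subseteq> N - {i}"
    and fpr: "\<forall>t\<in>{1..T}. normalized (f t) \<and> nondecreasing_on (ground N V) (f t) \<and> submodular_on (ground N V) (f t)"
    and fM: "\<forall>t\<in>{1..T}. \<forall>x\<in>ground N V. f t {x} \<le> M"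
begin

abbreviation "tr \<equiv> dog_traj N V Nb d T f M T"
abbreviation "ppi \<equiv> pp V Nb d T f M i"
abbreviation "lli \<equiv> ll Nb f M i"
abbreviation "lhi \<equiv> lh V Nb d T f M i"
abbreviation "eta \<equiv> dog_eta V d T i"

lemma fin_tr: "finite (set_pmf tr)" using traj_fin_valid[OF b, where n=T] by simp

lemma supp: "H \<in> set_pmf tr \<Longrightarrow> t \<in> {1..T} \<Longrightarrow> j \<in> N \<Longrightarrow> H t j \<in> V j"
  using traj_fin_valid[OF b, where n=T and Nb=Nb and d=d and T=T and f=f and M=M] by blast

lemma finV: "finite (V i)" "V i \<noteq> {}" using b iN unfolding bas_def by auto

lemma mb:
  assumes H: "H \<in> set_pmf tr" and t: "t \<in> {1..T}" and c: "c \<in> V i"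
  shows "0 \<le> marg (f t) (i, c) (Act (Nb i) (H t)) \<and> marg (f t) (i, c) (Act (Nb i) (H t)) \<le> M"
proof -
  define X where "X = Act (Nb i) (H t)"
  have XO: "X \<subseteq> ground N V" unfolding X_def using Nbi supp[OF H t] by (intro Act_sub) auto
  have xO: "(i, c) \<in> ground N V" using iN c by (auto simp: ground_def)
  have fp: "normalized (f t)" "nondecreasing_on (ground N V) (f t)" "submodular_on (ground N V) (f t)"
    using fpr t by auto
  have "f t X \<le> f t (X \<union> {(i, c)})" using XO xO by (intro monoD[OF fp(2)]) auto
  then have m0: "0 \<le> marg (f t) (i, c) X" unfolding marg_def by simp
  have "marg (f t) (i, c) X \<le> marg (f t) (i, c) {}" using XO xO by (intro submodD[OF fp(3)]) auto
  also have "\<dots> = f t {(i, c)}" using fp(1) unfolding marg_def normalized_def by simp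
  also have "\<dots> \<le> M" using fM t xO by auto
  finally show ?thesis using m0 unfolding X_def by simp
qed

lemma pvH: "H \<in> set_pmf tr \<Longrightarrow> pvalid V Nb T f M i H"
  unfolding pvalid_def using finV supp[OF _ _ iN] mb Mp
  by (auto simp: ll_def divide_le_eq_1 field_simps)

lemma u1: "t' \<le> s + d i \<Longrightarrow> ppi (H(s := X)) t' x = ppi H t' x"
  by (rule pp_dep) auto

lemma u2: "lli (H(s := (H s)(i := c))) s x = lli H s x"
proof -
  have "i \<notin> Nb i" using Nbi by auto
  then have "Act (Nb i) ((H s)(i := c)) = Act (Nb i) (H s)" unfolding Act_def by (intro image_cong) auto
  then show ?thesis unfolding ll_def by simp
qed

lemma ppdep: "(\<And>t. t \<le> s \<Longrightarrow> H t = H' t) \<Longrightarrow> t' \<le> s + d i \<Longrightarrow> ppi H t' x = ppi H' t' x"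
proof -
  assume h: "\<And>t. t \<le> s \<Longrightarrow> H t = H' t" and t': "t' \<le> s + d i"
  show ?thesis by (rule pp_dep) (use h t' in auto)
qed

lemma lldep: "(\<And>t. t \<le> s \<Longrightarrow> H t = H' t) \<Longrightarrow> lli H s x = lli H' s x"
  unfolding ll_def by simp

lemma ppi_pos: "ppi H t x > 0" using pp_pos[where V=V and i=i, OF finV] by simp

lemma r1:
  assumes s: "s \<in> {1..T}"
  shows "EE tr (\<lambda>H. ppi H (s + d i) (H s i) * lli H s (H s i) / ppi H s (H s i))
       = EE tr (\<lambda>H. \<Sum>c\<in>V i. ppi H (s + d i) c * lli H s c)"
proof -
  have "EE tr (\<lambda>H. ppi H (s + d i) (H s i) * lli H s (H s i) / ppi H s (H s i))
     = EE tr (\<lambda>H. \<Sum>c\<in>V i. ppi H s c * (\<lambda>H. ppi H (s + d i) (H s i) * lli H s (H s i) / ppi H s (H s i)) (H(s := (H s)(i := c))))"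
  proof (rule resample[OF b iN])
    fix H H' :: "nat \<Rightarrow> nat \<Rightarrow> nat" assume h: "\<And>t. t \<le> s \<Longrightarrow> H t = H' t"
    show "ppi H (s + d i) (H s i) * lli H s (H s i) / ppi H s (H s i) = ppi H' (s + d i) (H' s i) * lli H' s (H' s i) / ppi H' s (H' s i)"
      using ppdep[OF h, of "s + d i"] ppdep[OF h, of s] lldep[OF h] h[of s] by simp
  qed (use s in auto)
  also have "\<dots> = EE tr (\<lambda>H. \<Sum>c\<in>V i. ppi H (s + d i) c * lli H s c)"
  proof (rule exp_cong, rule sum.cong)
    fix H c
    show "ppi H s c * (\<lambda>H. ppi H (s + d i) (H s i) * lli H s (H s i) / ppi H s (H s i)) (H(s := (H s)(i := c)))
        = ppi H (s + d i) c * lli H s c"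
      using u1[of "s + d i" s H "(H s)(i := c)"] u1[of s s H "(H s)(i := c)"] u2[of H s c] ppi_pos[of H s c]
      by simp
  qed simp
  finally show ?thesis .
qed

lemma r2:
  assumes s: "s \<in> {1..T}"
  shows "EE tr (\<lambda>H. lli H s (H s i)) = EE tr (\<lambda>H. \<Sum>c\<in>V i. ppi H s c * lli H s c)"
proof -
  have "EE tr (\<lambda>H. lli H s (H s i))
     = EE tr (\<lambda>H. \<Sum>c\<in>V i. ppi H s c * (\<lambda>H. lli H s (H s i)) (H(s := (H s)(i := c))))"
  proof (rule resample[OF b iN])
    fix H H' :: "nat \<Rightarrow> nat \<Rightarrow> nat" assume h: "\<And>t. t \<le> s \<Longrightarrow> H t = H' t"
    show "lli H s (H s i) = lli H' s (H' s i)" using lldep[OF h] h[of s] by simp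
  qed (use s in auto)
  also have "\<dots> = EE tr (\<lambda>H. \<Sum>c\<in>V i. ppi H s c * lli H s c)"
    using u2 by simp
  finally show ?thesis .
qed

lemma r3:
  assumes s: "s \<in> {1..T}"
  shows "EE tr (\<lambda>H. lhi H s a) = EE tr (\<lambda>H. lli H s a)"
proof -
  have "EE tr (\<lambda>H. lhi H s a)
     = EE tr (\<lambda>H. \<Sum>c\<in>V i. ppi H s c * (\<lambda>H. lhi H s a) (H(s := (H s)(i := c))))"
  proof (rule resample[OF b iN])
    fix H H' :: "nat \<Rightarrow> nat \<Rightarrow> nat" assume h: "\<And>t. t \<le> s \<Longrightarrow> H t = H' t"
    show "lhi H s a = lhi H' s a" unfolding lh_def using ppdep[OF h, of s] lldep[OF h] h[of s] by simp
  qed (use s in auto)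
  also have "\<dots> = EE tr (\<lambda>H. lli H s a)"
  proof (rule exp_cong)
    fix H
    have "(\<Sum>c\<in>V i. ppi H s c * (\<lambda>H. lhi H s a) (H(s := (H s)(i := c))))
        = (\<Sum>c\<in>V i. if c = a then ppi H s a * (lli H s a / ppi H s a) else 0)"
      unfolding lh_def using u1[of s s H] u2[of H s] by (intro sum.cong) auto
    also have "\<dots> = lli H s a" using finV aV ppi_pos[of H s a] by simp
    finally show "(\<Sum>c\<in>V i. ppi H s c * (\<lambda>H. lhi H s a) (H(s := (H s)(i := c)))) = lli H s a" .
  qed
  finally show ?thesis .
qed

lemma r4:
  assumes s: "s \<in> {1..T}"
  shows "EE tr (\<lambda>H. lli H s (H s i) / ppi H s (H s i)) = EE tr (\<lambda>H. \<Sum>c\<in>V i. lli H s c)"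
proof -
  have "EE tr (\<lambda>H. lli H s (H s i) / ppi H s (H s i))
     = EE tr (\<lambda>H. \<Sum>c\<in>V i. ppi H s c * (\<lambda>H. lli H s (H s i) / ppi H s (H s i)) (H(s := (H s)(i := c))))"
  proof (rule resample[OF b iN])
    fix H H' :: "nat \<Rightarrow> nat \<Rightarrow> nat" assume h: "\<And>t. t \<le> s \<Longrightarrow> H t = H' t"
    show "lli H s (H s i) / ppi H s (H s i) = lli H' s (H' s i) / ppi H' s (H' s i)"
      using ppdep[OF h, of s] lldep[OF h] h[of s] by simp
  qed (use s in auto)
  also have "\<dots> = EE tr (\<lambda>H. \<Sum>c\<in>V i. lli H s c)"
  proof (rule exp_cong, rule sum.cong)
    fix H c
    show "ppi H s c * (\<lambda>H. lli H s (H s i) / ppi H s (H s i)) (H(s := (H s)(i := c))) = lli H s c"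
      using u1[of s s H "(H s)(i := c)"] u2[of H s c] ppi_pos[of H s c] by simp
  qed simp
  finally show ?thesis .
qed


lemma llr: "H \<in> set_pmf tr \<Longrightarrow> s \<in> {1..T} \<Longrightarrow> c \<in> V i \<Longrightarrow> 0 \<le> lli H s c \<and> lli H s c \<le> 1"
  using pvH unfolding pvalid_def by blast

lemma regret_main:
  assumes K2: "card (V i) \<ge> 2" and e1: "eta * (d i + 1) \<le> 1/4" and ep: "eta > 0"
  shows "(\<Sum>s\<in>{1..T}. EE tr (\<lambda>H. lli H s (H s i) - lli H s a))
     \<le> ln (card (V i)) / eta + 2 * eta * T * (card (V i) + d i)"
proof -
  define A where "A s H = ppi H (s + d i) (H s i) * lli H s (H s i) / ppi H s (H s i)" for s H
  define B where "B s H = lhi H s a" for s H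
  define C where "C s H = lli H s (H s i) / ppi H s (H s i)" for s H
  have e0: "eta \<ge> 0" using ep by simp
  have step: "EE tr (\<lambda>H. lli H s (H s i) - lli H s a) \<le> EE tr (A s) - EE tr (B s) + 2 * eta * d i"
    if s: "s \<in> {1..T}" for s
  proof -
    have q1: "EE tr (\<lambda>H. lli H s (H s i) - lli H s a) = EE tr (\<lambda>H. lli H s (H s i)) - EE tr (\<lambda>H. lli H s a)"
      using fin_tr by (rule exp_diff)
    have q2: "EE tr (\<lambda>H. lli H s (H s i)) = EE tr (\<lambda>H. \<Sum>c\<in>V i. ppi H s c * lli H s c)"
      using r2[OF s] .
    have q3: "EE tr (\<lambda>H. lli H s a) = EE tr (B s)"
      unfolding B_def using r3[OF s] by simp
    have q4: "EE tr (\<lambda>H. \<Sum>c\<in>V i. ppi H s c * lli H s c) \<le> EE tr (\<lambda>H. (\<Sum>c\<in>V i. ppi H (s + d i) c * lli H s c) + 2 * eta * d i)"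
    proof (rule exp_mono[OF fin_tr])
      fix H assume H: "H \<in> set_pmf tr"
      have "(\<Sum>c\<in>V i. ppi H s c * lli H s c) - 2 * eta * real (d i) \<le> (\<Sum>c\<in>V i. ppi H (s + d i) c * lli H s c)"
        using s llr[OF H s] by (intro drift[where V=V and Nb=Nb and d=d and T=T and f=f and M=M and i=i, OF pvH[OF H] e0 e1]) auto
      then show "(\<Sum>c\<in>V i. ppi H s c * lli H s c) \<le> (\<Sum>c\<in>V i. ppi H (s + d i) c * lli H s c) + 2 * eta * d i"
        by simp
    qed
    have q5: "EE tr (\<lambda>H. (\<Sum>c\<in>V i. ppi H (s + d i) c * lli H s c) + 2 * eta * d i)
          = EE tr (\<lambda>H. \<Sum>c\<in>V i. ppi H (s + d i) c * lli H s c) + EE tr (\<lambda>H. 2 * eta * d i)"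
      by (rule exp_add[OF fin_tr])
    have q6: "EE tr (\<lambda>H. \<Sum>c\<in>V i. ppi H (s + d i) c * lli H s c) = EE tr (A s)"
      unfolding A_def using r1[OF s] by simp
    have q7: "EE tr (\<lambda>H. 2 * eta * d i) = 2 * eta * d i" by (rule exp_const)
    show ?thesis using q1 q2 q3 q4 q5 q6 q7 by linarith
  qed
  have "(\<Sum>s\<in>{1..T}. EE tr (\<lambda>H. lli H s (H s i) - lli H s a)) \<le> (\<Sum>s\<in>{1..T}. EE tr (A s) - EE tr (B s) + 2 * eta * d i)"
    using step by (rule sum_mono)
  also have "\<dots> = (\<Sum>s\<in>{1..T}. EE tr (A s) - EE tr (B s)) + T * (2 * eta * d i)"
    by (simp add: sum.distrib)
  also have "(\<Sum>s\<in>{1..T}. EE tr (A s) - EE tr (B s)) = (\<Sum>s\<in>{1..T}. EE tr (\<lambda>H. A s H - B s H))"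
    by (intro sum.cong refl exp_diff[OF fin_tr, symmetric])
  also have "\<dots> = EE tr (\<lambda>H. \<Sum>s\<in>{1..T}. A s H - B s H)"
    by (rule exp_finite_sum[OF fin_tr, symmetric])
  also have "EE tr (\<lambda>H. \<Sum>s\<in>{1..T}. A s H - B s H) \<le> EE tr (\<lambda>H. ln (card (V i)) / eta + 2 * eta * (\<Sum>s\<in>{1..T}. C s H))"
  proof (rule exp_mono[OF fin_tr])
    fix H assume H: "H \<in> set_pmf tr"
    show "(\<Sum>s\<in>{1..T}. A s H - B s H) \<le> ln (card (V i)) / eta + 2 * eta * (\<Sum>s\<in>{1..T}. C s H)"
      unfolding A_def B_def C_def
      by (rule potential[where V=V and Nb=Nb and d=d and T=T and f=f and M=M and i=i, OF pvH[OF H] ep e1 aV])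
  qed
  also have "EE tr (\<lambda>H. ln (card (V i)) / eta + 2 * eta * (\<Sum>s\<in>{1..T}. C s H))
      = ln (card (V i)) / eta + 2 * eta * (\<Sum>s\<in>{1..T}. EE tr (C s))"
  proof -
    have "EE tr (\<lambda>H. ln (card (V i)) / eta + 2 * eta * (\<Sum>s\<in>{1..T}. C s H))
       = EE tr (\<lambda>H. ln (card (V i)) / eta) + EE tr (\<lambda>H. 2 * eta * (\<Sum>s\<in>{1..T}. C s H))"
      by (rule exp_add[OF fin_tr])
    also have "EE tr (\<lambda>H. 2 * eta * (\<Sum>s\<in>{1..T}. C s H)) = 2 * eta * EE tr (\<lambda>H. \<Sum>s\<in>{1..T}. C s H)"
      by (rule exp_cmult)
    also have "EE tr (\<lambda>H. \<Sum>s\<in>{1..T}. C s H) = (\<Sum>s\<in>{1..T}. EE tr (C s))"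
      by (rule exp_finite_sum[OF fin_tr])
    finally show ?thesis by simp
  qed
  also have "(\<Sum>s\<in>{1..T}. EE tr (C s)) \<le> (\<Sum>s\<in>{1..T}. real (card (V i)))"
  proof (rule sum_mono)
    fix s assume s: "s \<in> {1..T}"
    have "EE tr (C s) = EE tr (\<lambda>H. \<Sum>c\<in>V i. lli H s c)" unfolding C_def by (rule r4[OF s])
    also have "\<dots> \<le> EE tr (\<lambda>H. \<Sum>c\<in>V i. 1)"
      using llr s by (intro exp_mono[OF fin_tr] sum_mono) auto
    finally show "EE tr (C s) \<le> real (card (V i))" by simp
  qed
  finally have "(\<Sum>s\<in>{1..T}. EE tr (\<lambda>H. lli H s (H s i) - lli H s a))
     \<le> ln (card (V i)) / eta + 2 * eta * (T * card (V i)) + T * (2 * eta * d i)"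
    using e0 by (simp add: mult_left_mono)
  then show ?thesis by (simp add: algebra_simps)
qed


lemma regret_final:
  assumes T0: "T > 0" and Vb: "card (V i) + d i \<le> Vb"
  shows "EE tr (\<lambda>H. (1 / real T) * (\<Sum>t\<in>{1..T}. marg (f t) (i, a) (Act (Nb i) (H t)) - marg (f t) (i, H t i) (Act (Nb i) (H t))))
     \<le> 4 * M * ((1 + ln (real Vb)) * sqrt (real Vb / real T))"
proof -
  define \<rho> where "\<rho> = (1 + ln (real Vb)) * sqrt (real Vb / real T)"
  define \<Delta> where "\<Delta> H t = marg (f t) (i, a) (Act (Nb i) (H t)) - marg (f t) (i, H t i) (Act (Nb i) (H t))" for H t
  have c1: "card (V i) \<ge> 1" using finV by (simp add: Suc_le_eq card_gt_0_iff)
  have V1: "real Vb \<ge> 1" using Vb c1 by simp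
  have \<rho>0: "\<rho> \<ge> 0" unfolding \<rho>_def using V1 by simp
  have Dl: "\<Delta> H t = M * (lli H t (H t i) - lli H t a)" for H t
    unfolding \<Delta>_def ll_def using Mp by (simp add: field_simps)
  have DM: "\<Delta> H t \<le> M" if H: "H \<in> set_pmf tr" and t: "t \<in> {1..T}" for H t
    using mb[OF H t aV] mb[OF H t supp[OF H t iN]] unfolding \<Delta>_def by simp
  have goal: "EE tr (\<lambda>H. (1 / real T) * (\<Sum>t\<in>{1..T}. \<Delta> H t)) \<le> 4 * M * \<rho>"
  proof (cases "\<rho> > 1/4")
    case True
    have "EE tr (\<lambda>H. (1 / real T) * (\<Sum>t\<in>{1..T}. \<Delta> H t)) \<le> EE tr (\<lambda>H. (1 / real T) * (\<Sum>t\<in>{1..T}. M))"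
    proof (rule exp_mono[OF fin_tr])
      fix H assume H: "H \<in> set_pmf tr"
      have "(\<Sum>t\<in>{1..T}. \<Delta> H t) \<le> (\<Sum>t\<in>{1..T}. M)" using DM[OF H] by (rule sum_mono)
      then show "(1 / real T) * (\<Sum>t\<in>{1..T}. \<Delta> H t) \<le> (1 / real T) * (\<Sum>t\<in>{1..T}. M)"
        using T0 by (intro mult_left_mono) auto
    qed
    also have "EE tr (\<lambda>H. (1 / real T) * (\<Sum>t\<in>{1..T}. M)) = M" using T0 by simp
    also have "M \<le> 4 * M * \<rho>" using True Mp by (simp add: algebra_simps)
    finally show ?thesis .
  next
    case False
    then have \<rho>4: "\<rho> \<le> 1/4" by simp
    show ?thesis
    proof (cases "card (V i) \<ge> 2")
      case False
      then have "card (V i) = 1" using c1 by simp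
      then obtain z where z: "V i = {z}" by (auto simp: card_Suc_eq)
      have eqn: "EE tr (\<lambda>H. (1 / real T) * (\<Sum>t\<in>{1..T}. \<Delta> H t)) = EE tr (\<lambda>H. 0)"
      proof (rule exp_cong)
        fix H assume H: "H \<in> set_pmf tr"
        have "\<Delta> H t = 0" if t: "t \<in> {1..T}" for t
          using supp[OF H t iN] aV z unfolding \<Delta>_def by simp
        then show "(1 / real T) * (\<Sum>t\<in>{1..T}. \<Delta> H t) = 0" by simp
      qed
      have Z: "EE tr (\<lambda>H. (1 / real T) * (\<Sum>t\<in>{1..T}. \<Delta> H t)) = 0" using eqn by simp
      show ?thesis unfolding Z using \<rho>0 Mp by simp
    next
      case True
      define K where "K = real (card (V i))"
      have K2: "K \<ge> 2" unfolding K_def using True by simp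
      have Kd: "K + real (d i) \<le> real Vb" unfolding K_def using Vb by simp
      have etadef: "eta = sqrt (ln K / ((K + real (d i)) * real T))" unfolding K_def dog_eta_def ..
      have nb1: "(ln K / eta + 2 * eta * real T * (K + real (d i))) / real T \<le> 3 * \<rho>"
        and nb2: "eta * (real (d i) + 1) \<le> \<rho>" and nb3: "eta > 0"
        using num_bound[OF K2 _ _ Kd] T0 unfolding \<rho>_def etadef by auto
      have e1: "eta * (d i + 1) \<le> 1/4" using nb2 \<rho>4 by (simp add: add.commute)
      have R: "(\<Sum>s\<in>{1..T}. EE tr (\<lambda>H. lli H s (H s i) - lli H s a))
         \<le> ln K / eta + 2 * eta * T * (K + d i)"
        using regret_main[OF True e1 nb3] unfolding K_def by simp
      have "EE tr (\<lambda>H. (1 / real T) * (\<Sum>t\<in>{1..T}. \<Delta> H t))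
          = EE tr (\<lambda>H. (M / real T) * (\<Sum>t\<in>{1..T}. lli H t (H t i) - lli H t a))"
        unfolding Dl by (simp add: sum_distrib_left[symmetric])
      also have "\<dots> = (M / real T) * EE tr (\<lambda>H. \<Sum>t\<in>{1..T}. lli H t (H t i) - lli H t a)"
        by (rule exp_cmult)
      also have "EE tr (\<lambda>H. \<Sum>t\<in>{1..T}. lli H t (H t i) - lli H t a) = (\<Sum>s\<in>{1..T}. EE tr (\<lambda>H. lli H s (H s i) - lli H s a))"
        by (rule exp_finite_sum[OF fin_tr])
      finally have eq: "EE tr (\<lambda>H. (1 / real T) * (\<Sum>t\<in>{1..T}. \<Delta> H t))
          = M * ((\<Sum>s\<in>{1..T}. EE tr (\<lambda>H. lli H s (H s i) - lli H s a)) / real T)" by simp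
      have "(\<Sum>s\<in>{1..T}. EE tr (\<lambda>H. lli H s (H s i) - lli H s a)) / real T
          \<le> (ln K / eta + 2 * eta * T * (K + d i)) / real T"
        using R T0 by (intro divide_right_mono) auto
      also have "\<dots> \<le> 3 * \<rho>" using nb1 by simp
      finally have "M * ((\<Sum>s\<in>{1..T}. EE tr (\<lambda>H. lli H s (H s i) - lli H s a)) / real T) \<le> M * (3 * \<rho>)"
        using Mp by (intro mult_left_mono) auto
      moreover have "M * (3 * \<rho>) \<le> 4 * M * \<rho>" using mult_nonneg_nonneg[of M \<rho>] Mp \<rho>0 by simp
      ultimately show ?thesis unfolding eq by linarith
    qed
  qed
  then show ?thesis unfolding \<Delta>_def \<rho>_def .
qed

end


context
  fixes N :: "nat set" and V :: "nat \<Rightarrow> nat set" and Nb :: "nat \<Rightarrow> nat set" and d :: "nat \<Rightarrow> nat"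
    and T :: nat and f :: "nat \<Rightarrow> (nat \<times> nat) set \<Rightarrow> real" and M :: real
  assumes b: "bas N V"
begin

abbreviation "DE \<equiv> dog_E N V Nb d T f M"
abbreviation "trT \<equiv> dog_traj N V Nb d T f M T"

lemma finT: "finite (set_pmf trT)" using traj_fin_valid[OF b, where n=T] by simp

lemma DE_mono:
  assumes "\<And>H t. H \<in> set_pmf trT \<Longrightarrow> t \<in> {1..T} \<Longrightarrow> F H t \<le> G H t"
  shows "DE F \<le> DE G"
  unfolding dog_E_def
proof (rule exp_mono[OF finT])
  fix H assume H: "H \<in> set_pmf trT"
  have "(\<Sum>t\<in>{1..T}. F H t) \<le> (\<Sum>t\<in>{1..T}. G H t)" using assms[OF H] by (rule sum_mono)
  then show "1 / real T * (\<Sum>t\<in>{1..T}. F H t) \<le> 1 / real T * (\<Sum>t\<in>{1..T}. G H t)"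
    by (intro mult_left_mono) auto
qed

lemma DE_add: "DE (\<lambda>H t. F H t + G H t) = DE F + DE G"
proof -
  have "DE (\<lambda>H t. F H t + G H t) = EE trT (\<lambda>H. 1 / real T * (\<Sum>t\<in>{1..T}. F H t) + 1 / real T * (\<Sum>t\<in>{1..T}. G H t))"
    unfolding dog_E_def by (simp add: sum.distrib distrib_left)
  also have "\<dots> = DE F + DE G" unfolding dog_E_def by (rule exp_add[OF finT])
  finally show ?thesis .
qed

lemma DE_cmult: "DE (\<lambda>H t. c * F H t) = c * DE F"
proof -
  have "DE (\<lambda>H t. c * F H t) = EE trT (\<lambda>H. c * (1 / real T * (\<Sum>t\<in>{1..T}. F H t)))"
    unfolding dog_E_def by (simp add: sum_distrib_left[symmetric] algebra_simps)
  also have "\<dots> = c * DE F" unfolding dog_E_def by (rule exp_cmult)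
  finally show ?thesis .
qed

lemma DE_sum: "DE (\<lambda>H t. \<Sum>i\<in>I. X i H t) = (\<Sum>i\<in>I. DE (X i))"
proof -
  have "DE (\<lambda>H t. \<Sum>i\<in>I. X i H t) = EE trT (\<lambda>H. \<Sum>i\<in>I. 1 / real T * (\<Sum>t\<in>{1..T}. X i H t))"
  proof -
    have sw: "(\<Sum>t\<in>{1..T}. \<Sum>i\<in>I. X i H t) = (\<Sum>i\<in>I. \<Sum>t\<in>{1..T}. X i H t)" for H
      by (rule sum.swap)
    show ?thesis unfolding dog_E_def sw by (simp add: sum_distrib_left)
  qed
  also have "\<dots> = (\<Sum>i\<in>I. DE (X i))" unfolding dog_E_def by (rule exp_finite_sum[OF finT])
  finally show ?thesis .
qed

lemma DE_const: "DE (\<lambda>H t. g t) = 1 / real T * (\<Sum>t\<in>{1..T}. g t)"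
  unfolding dog_E_def by simp

lemma DE_cong: "(\<And>H t. H \<in> set_pmf trT \<Longrightarrow> t \<in> {1..T} \<Longrightarrow> F H t = G H t) \<Longrightarrow> DE F = DE G"
  unfolding dog_E_def by (rule exp_cong) (auto intro!: arg_cong[where f="\<lambda>x. _ * x"] sum.cong)

end

lemma comb_dec:
  assumes finN: "finite N" and finV: "\<forall>i\<in>N. finite (V i)"
    and nor: "normalized g" and mono: "nondecreasing_on (ground N V) g"
    and sub: "submodular_on (ground N V) g"
    and a: "\<forall>i\<in>N. a i \<in> V i" and as: "\<forall>i\<in>N. as i \<in> V i"
    and kc: "curvature (ground N V) g \<le> \<kappa>" and k1: "\<kappa> \<le> 1"
  shows "(1 - \<kappa>) * (g (Act N as) - (\<Sum>i\<in>N. marg g (i, as i) (Act {} a) - marg g (i, a i) (Act {} a)))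
     \<le> g (Act N a)"
proof -
  define Om where "Om = ground N V"
  have finOm: "finite Om" unfolding Om_def using finN finV by (rule finite_ground)
  have cf: "\<And>x. x \<in> Om \<Longrightarrow> g Om - g (Om - {x}) \<ge> (1 - curvature Om g) * g {x}"
    using curv_facts[OF finOm mono[folded Om_def] sub[folded Om_def] nor] by auto
  have inj: "inj_on (\<lambda>i. (i, h i)) S" for h :: "nat \<Rightarrow> nat" and S by (auto simp: inj_on_def)
  have sumAct: "(\<Sum>x\<in>Act S h. F x) = (\<Sum>i\<in>S. F (i, h i))" for S h and F :: "nat \<times> nat \<Rightarrow> real"
    unfolding Act_def by (rule sum.reindex[OF inj, unfolded comp_def])
  have m0: "marg g x {} = g {x}" for x using nor unfolding marg_def normalized_def by simp
  have A0: "Act {} h = {}" for h by (simp add: Act_def)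
  have AO: "Act N a \<subseteq> Om" "Act N as \<subseteq> Om" unfolding Om_def using a as by (auto simp: Act_def ground_def)
  have up: "g (Act N as) \<le> (\<Sum>i\<in>N. g {(i, as i)})"
  proof -
    have "g ({} \<union> Act N as) - g {} \<le> (\<Sum>x\<in>Act N as. marg g x {})"
      using finN AO by (intro sum_marg_upper[OF sub[folded Om_def]]) (auto simp: Act_def)
    then show ?thesis using nor unfolding m0 sumAct normalized_def by simp
  qed
  have low: "(1 - \<kappa>) * (\<Sum>i\<in>N. g {(i, a i)}) \<le> g (Act N a)"
  proof -
    have "(1 - \<kappa>) * (\<Sum>i\<in>N. g {(i, a i)}) = (\<Sum>i\<in>N. (1 - \<kappa>) * g {(i, a i)})" by (simp add: sum_distrib_left)
    also have "\<dots> \<le> (\<Sum>i\<in>N. marg g (i, a i) (Om - {(i, a i)}))"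
    proof (rule sum_mono)
      fix i assume i: "i \<in> N"
      have xO: "(i, a i) \<in> Om" using i a unfolding Om_def by (auto simp: ground_def)
      have gx: "g {(i, a i)} \<ge> 0" using nonneg_on[OF nor mono] xO Om_def by auto
      have "(1 - \<kappa>) * g {(i, a i)} \<le> (1 - curvature Om g) * g {(i, a i)}"
        using kc gx Om_def by (intro mult_right_mono) auto
      also have "\<dots> \<le> g Om - g (Om - {(i, a i)})" using cf[OF xO] .
      also have "\<dots> = marg g (i, a i) (Om - {(i, a i)})" unfolding marg_def using xO
        by (simp add: insert_absorb)
      finally show "(1 - \<kappa>) * g {(i, a i)} \<le> marg g (i, a i) (Om - {(i, a i)})" .
    qed
    also have "\<dots> = (\<Sum>x\<in>Act N a. marg g x (Om - {x}))" by (rule sumAct[symmetric])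
    also have "\<dots> \<le> g ({} \<union> Act N a) - g {}"
      using finN AO by (intro sum_marg_lower[OF sub[folded Om_def]]) (auto simp: Act_def)
    finally show ?thesis using nor unfolding normalized_def by simp
  qed
  have "g (Act N as) - (\<Sum>i\<in>N. marg g (i, as i) (Act {} a) - marg g (i, a i) (Act {} a)) \<le> (\<Sum>i\<in>N. g {(i, a i)})"
    using up unfolding A0 m0 by (simp add: sum_subtractf)
  then have "(1 - \<kappa>) * (g (Act N as) - (\<Sum>i\<in>N. marg g (i, as i) (Act {} a) - marg g (i, a i) (Act {} a)))
      \<le> (1 - \<kappa>) * (\<Sum>i\<in>N. g {(i, a i)})" using k1 by (intro mult_left_mono) auto
  then show ?thesis using low by linarith
qed


lemma fin_alg:
  fixes k X c D err opt :: real
  assumes k: "k \<ge> 0" and e: "err \<ge> 0" and De: "D \<le> err" and m: "opt \<le> (1 + k) * X + k * c + D"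
  shows "1 / (1 + k) * opt - k / (1 + k) * c - err \<le> X"
proof -
  have k1: "1 + k > 0" using k by simp
  have "opt - k * c - D \<le> X * (1 + k)" using m by (simp add: algebra_simps)
  then have "(opt - k * c - D) / (1 + k) \<le> X" using k1 by (simp add: pos_divide_le_eq)
  moreover have "D / (1 + k) \<le> err"
  proof (cases "D \<ge> 0")
    case True
    then have "D / (1 + k) \<le> D" using k by (simp add: divide_le_eq mult_le_cancel_left1 algebra_simps)
    then show ?thesis using De by simp
  next
    case False
    then have "D / (1 + k) \<le> 0" using k1 by (simp add: divide_le_0_iff)
    then show ?thesis using e by simp
  qed
  moreover have "(opt - k * c - D) / (1 + k) = 1 / (1 + k) * opt - k / (1 + k) * c - D / (1 + k)"
    by (simp add: diff_divide_distrib)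
  ultimately show ?thesis by linarith
qed

lemma main:
  assumes ds: "dog_setting N V Nb d T f M Astar"
  shows "let \<kappa> = kappa N V T f;
         E = dog_E N V Nb d T f M;
         opt = (1 / real T) * (\<Sum>t\<in>{1..T}. f t (Act N Astar));
         err = 4 * M * real (card N) * (1 + ln (real (Vd_bar N V d)))
                 * sqrt (real (Vd_bar N V d) / real T)
     in E (\<lambda>H t. f t (Act N (H t)))
          \<ge> 1 / (1 + \<kappa>) * opt
            - \<kappa> / (1 + \<kappa>) * (\<Sum>i\<in>N. E (\<lambda>H t. coin N Nb (f t) i (H t)))
            - err
      \<and> ((\<forall>i\<in>N. Nb i = N - {i}) \<longrightarrow>
           E (\<lambda>H t. f t (Act N (H t))) \<ge> 1 / (1 + \<kappa>) * opt - err)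
      \<and> ((\<forall>i\<in>N. Nb i = {}) \<longrightarrow>
           E (\<lambda>H t. f t (Act N (H t))) \<ge> (1 - \<kappa>) * opt - err)"
proof -
  have finN: "finite N" and VV: "\<forall>i\<in>N. finite (V i) \<and> V i \<noteq> {}" and Nbs: "\<forall>i\<in>N. Nb i \<subseteq> N - {i}"
    and T0: "T > 0" and Mp: "M > 0"
    and fp: "\<forall>t\<in>{1..T}. normalized (f t) \<and> nondecreasing_on (ground N V) (f t) \<and>
        submodular_on (ground N V) (f t) \<and> second_order_submodular_on (ground N V) (f t)"
    and fM: "\<forall>t\<in>{1..T}. \<forall>x\<in>ground N V. f t {x} \<le> M" and As: "\<forall>i\<in>N. Astar i \<in> V i"
    using ds unfolding dog_setting_def by auto
  have b: "bas N V" unfolding bas_def using finN VV by auto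
  have finV: "\<forall>i\<in>N. finite (V i)" using VV by auto
  have finG: "finite (ground N V)" using finN finV by (rule finite_ground)
  define \<kappa> where "\<kappa> = kappa N V T f"
  define E where "E = dog_E N V Nb d T f M"
  define opt where "opt = (1 / real T) * (\<Sum>t\<in>{1..T}. f t (Act N Astar))"
  define Vb where "Vb = Vd_bar N V d"
  define \<rho> where "\<rho> = (1 + ln (real Vb)) * sqrt (real Vb / real T)"
  define err where "err = 4 * M * real (card N) * (1 + ln (real Vb)) * sqrt (real Vb / real T)"
  have errr: "err = real (card N) * (4 * M * \<rho>)" unfolding err_def \<rho>_def by simp
  have fin_img: "finite ((\<lambda>t. curvature (ground N V) (f t)) ` {1..T})" by simp
  have kge: "curvature (ground N V) (f t) \<le> \<kappa>" if t: "t \<in> {1..T}" for t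
    unfolding \<kappa>_def kappa_def using fin_img t by (intro Max_ge) auto
  have cb: "0 \<le> curvature (ground N V) (f t) \<and> curvature (ground N V) (f t) \<le> 1" if t: "t \<in> {1..T}" for t
    using curv_facts[OF finG, of "f t"] fp t by auto
  have kin: "\<kappa> \<in> (\<lambda>t. curvature (ground N V) (f t)) ` {1..T}"
    unfolding \<kappa>_def kappa_def using fin_img T0 by (intro Max_in) auto
  have k0: "0 \<le> \<kappa>" and k1: "\<kappa> \<le> 1" using kin cb by auto
  have Vbi: "card (V i) + d i \<le> Vb" if i: "i \<in> N" for i
    unfolding Vb_def Vd_bar_def using finN i by (intro Max_ge) auto
  have err0: "err \<ge> 0"
  proof (cases "N = {}")
    case True then show ?thesis unfolding err_def by simp
  next
    case False
    then obtain i where i: "i \<in> N" by auto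
    have "card (V i) \<ge> 1" using VV i by (simp add: Suc_le_eq card_gt_0_iff)
    then have "real Vb \<ge> 1" using Vbi[OF i] by simp
    then have "\<rho> \<ge> 0" unfolding \<rho>_def by simp
    then show ?thesis unfolding errr using Mp by simp
  qed
  define \<Delta> where "\<Delta> i H t = marg (f t) (i, Astar i) (Act (Nb i) (H t)) - marg (f t) (i, H t i) (Act (Nb i) (H t))" for i H t
  have fpr: "\<forall>t\<in>{1..T}. normalized (f t) \<and> nondecreasing_on (ground N V) (f t) \<and> submodular_on (ground N V) (f t)"
    using fp by auto
  have RB: "E (\<Delta> i) \<le> 4 * M * \<rho>" if i: "i \<in> N" for i
  proof -
    have "EE (dog_traj N V Nb d T f M T) (\<lambda>H. (1 / real T) * (\<Sum>t\<in>{1..T}. marg (f t) (i, Astar i) (Act (Nb i) (H t)) - marg (f t) (i, H t i) (Act (Nb i) (H t))))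
       \<le> 4 * M * ((1 + ln (real Vb)) * sqrt (real Vb / real T))"
      using regret_final[where N=N and V=V and Nb=Nb and d=d and T=T and f=f and M=M and i=i and a="Astar i",
          OF b i Mp _ _ fpr fM T0 Vbi[OF i]] As Nbs i by auto
    then show ?thesis unfolding E_def dog_E_def \<Delta>_def \<rho>_def .
  qed
  have SR: "(\<Sum>i\<in>N. E (\<Delta> i)) \<le> err"
  proof -
    have "(\<Sum>i\<in>N. E (\<Delta> i)) \<le> (\<Sum>i\<in>N. 4 * M * \<rho>)" using RB by (rule sum_mono)
    then show ?thesis unfolding errr by simp
  qed
  have supp: "H t j \<in> V j" if "H \<in> set_pmf (dog_traj N V Nb d T f M T)" "t \<in> {1..T}" "j \<in> N" for H t j
    using traj_fin_valid[OF b, where n=T and Nb=Nb and d=d and T=T and f=f and M=M] that by blast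
  define cc where "cc i H t = coin N Nb (f t) i (H t)" for i H t
  have claim1: "E (\<lambda>H t. f t (Act N (H t))) \<ge> 1 / (1 + \<kappa>) * opt - \<kappa> / (1 + \<kappa>) * (\<Sum>i\<in>N. E (cc i)) - err"
  proof -
    have pw: "f t (Act N Astar) \<le> (1 + \<kappa>) * f t (Act N (H t)) + \<kappa> * (\<Sum>i\<in>N. cc i H t) + (\<Sum>i\<in>N. \<Delta> i H t)"
      if H: "H \<in> set_pmf (dog_traj N V Nb d T f M T)" and t: "t \<in> {1..T}" for H t
    proof -
      have "f t (Act N Astar) - (\<Sum>i\<in>N. marg (f t) (i, Astar i) (Act (Nb i) (H t)) - marg (f t) (i, H t i) (Act (Nb i) (H t)))
          \<le> (1 + \<kappa>) * f t (Act N (H t)) + \<kappa> * (\<Sum>i\<in>N. coin N Nb (f t) i (H t))"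
        using fp t supp[OF H t] As Nbs kge[OF t] k1
        by (intro comb_main[OF finN finV]) auto
      then show ?thesis unfolding cc_def \<Delta>_def by simp
    qed
    have "opt = E (\<lambda>H t. f t (Act N Astar))" unfolding opt_def E_def using DE_const[OF b, where Nb=Nb and d=d and T=T and f=f and M=M and g="\<lambda>t. f t (Act N Astar)"] by simp
    also have "\<dots> \<le> E (\<lambda>H t. (1 + \<kappa>) * f t (Act N (H t)) + \<kappa> * (\<Sum>i\<in>N. cc i H t) + (\<Sum>i\<in>N. \<Delta> i H t))"
      unfolding E_def using pw by (intro DE_mono[OF b]) auto
    also have "\<dots> = (1 + \<kappa>) * E (\<lambda>H t. f t (Act N (H t))) + \<kappa> * (\<Sum>i\<in>N. E (cc i)) + (\<Sum>i\<in>N. E (\<Delta> i))"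
      unfolding E_def DE_add[OF b] DE_cmult[OF b] DE_sum[OF b] ..
    finally have m: "opt \<le> (1 + \<kappa>) * E (\<lambda>H t. f t (Act N (H t))) + \<kappa> * (\<Sum>i\<in>N. E (cc i)) + (\<Sum>i\<in>N. E (\<Delta> i))" .
    show ?thesis by (rule fin_alg[OF k0 err0 SR m])
  qed
  have claim2: "E (\<lambda>H t. f t (Act N (H t))) \<ge> 1 / (1 + \<kappa>) * opt - err" if c: "\<forall>i\<in>N. Nb i = N - {i}"
  proof -
    have "E (cc i) = 0" if i: "i \<in> N" for i
    proof -
      have "E (cc i) = E (\<lambda>H t. 0)"
        unfolding E_def
      proof (rule DE_cong[OF b])
        fix H t assume t: "t \<in> {1..T}"
        have e: "N - {i} - Nb i = {}" using c i by auto
        show "cc i H t = 0" unfolding cc_def coin_def e using fp t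
          by (simp add: normalized_def marg_def Act_def)
      qed
      then show ?thesis unfolding E_def using DE_const[OF b, where Nb=Nb and d=d and T=T and f=f and M=M and g="\<lambda>t. 0"] by simp
    qed
    then have "(\<Sum>i\<in>N. E (cc i)) = 0" by simp
    then show ?thesis using claim1 by simp
  qed
  have claim3: "E (\<lambda>H t. f t (Act N (H t))) \<ge> (1 - \<kappa>) * opt - err" if c: "\<forall>i\<in>N. Nb i = {}"
  proof -
    have pw: "(1 - \<kappa>) * f t (Act N Astar) + (- (1 - \<kappa>)) * (\<Sum>i\<in>N. \<Delta> i H t) \<le> f t (Act N (H t))"
      if H: "H \<in> set_pmf (dog_traj N V Nb d T f M T)" and t: "t \<in> {1..T}" for H t
    proof -
      have "(1 - \<kappa>) * (f t (Act N Astar) - (\<Sum>i\<in>N. marg (f t) (i, Astar i) (Act {} (H t)) - marg (f t) (i, H t i) (Act {} (H t))))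
          \<le> f t (Act N (H t))"
        using fp t supp[OF H t] As kge[OF t] k1
        by (intro comb_dec[OF finN finV]) auto
      moreover have "(\<Sum>i\<in>N. \<Delta> i H t) = (\<Sum>i\<in>N. marg (f t) (i, Astar i) (Act {} (H t)) - marg (f t) (i, H t i) (Act {} (H t)))"
        unfolding \<Delta>_def using c by (intro sum.cong) auto
      ultimately show ?thesis by (simp add: algebra_simps)
    qed
    have "E (\<lambda>H t. (1 - \<kappa>) * f t (Act N Astar) + (- (1 - \<kappa>)) * (\<Sum>i\<in>N. \<Delta> i H t)) \<le> E (\<lambda>H t. f t (Act N (H t)))"
      unfolding E_def using pw by (intro DE_mono[OF b]) auto
    moreover have "E (\<lambda>H t. (1 - \<kappa>) * f t (Act N Astar) + (- (1 - \<kappa>)) * (\<Sum>i\<in>N. \<Delta> i H t))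
        = (1 - \<kappa>) * opt - (1 - \<kappa>) * (\<Sum>i\<in>N. E (\<Delta> i))"
    proof -
      have "E (\<lambda>H t. (1 - \<kappa>) * f t (Act N Astar) + (- (1 - \<kappa>)) * (\<Sum>i\<in>N. \<Delta> i H t))
          = (1 - \<kappa>) * E (\<lambda>H t. f t (Act N Astar)) + (- (1 - \<kappa>)) * (\<Sum>i\<in>N. E (\<Delta> i))"
        unfolding E_def DE_add[OF b] DE_cmult[OF b] DE_sum[OF b] ..
      moreover have "E (\<lambda>H t. f t (Act N Astar)) = opt" unfolding opt_def E_def using DE_const[OF b, where Nb=Nb and d=d and T=T and f=f and M=M and g="\<lambda>t. f t (Act N Astar)"] by simp
      ultimately show ?thesis by (simp add: algebra_simps)
    qed
    moreover have "(1 - \<kappa>) * (\<Sum>i\<in>N. E (\<Delta> i)) \<le> err"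
    proof -
      have "(1 - \<kappa>) * (\<Sum>i\<in>N. E (\<Delta> i)) \<le> (1 - \<kappa>) * err" using SR k1 by (intro mult_left_mono) auto
      also have "\<dots> \<le> err" using k0 err0 by (simp add: mult_le_cancel_right1 algebra_simps)
      finally show ?thesis .
    qed
    ultimately show ?thesis by linarith
  qed
  show ?thesis
    unfolding Let_def \<kappa>_def[symmetric] E_def[symmetric] opt_def[symmetric] Vb_def[symmetric] err_def[symmetric]
    using claim1 claim2 claim3 unfolding cc_def by blast
qed

theorem theorem1:
  shows "\<exists>C>0. \<forall>N V Nb d T f M Astar. dog_setting N V Nb d T f M Astar \<longrightarrow>
    (let \<kappa> = kappa N V T f;
         E = dog_E N V Nb d T f M;
         opt = (1 / real T) * (\<Sum>t\<in>{1..T}. f t (Act N Astar));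
         err = C * M * real (card N) * (1 + ln (real (Vd_bar N V d)))
                 * sqrt (real (Vd_bar N V d) / real T)
     in E (\<lambda>H t. f t (Act N (H t)))
          \<ge> 1 / (1 + \<kappa>) * opt
            - \<kappa> / (1 + \<kappa>) * (\<Sum>i\<in>N. E (\<lambda>H t. coin N Nb (f t) i (H t)))
            - err
      \<and> ((\<forall>i\<in>N. Nb i = N - {i}) \<longrightarrow>
           E (\<lambda>H t. f t (Act N (H t))) \<ge> 1 / (1 + \<kappa>) * opt - err)
      \<and> ((\<forall>i\<in>N. Nb i = {}) \<longrightarrow>
           E (\<lambda>H t. f t (Act N (H t))) \<ge> (1 - \<kappa>) * opt - err))"
proof (intro exI[of _ "4::real"] conjI allI impI)
  show "(4::real) > 0" by simp
next
  fix N V Nb d T f M Astar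
  assume "dog_setting N V Nb d T f M Astar"
  then show "let \<kappa> = kappa N V T f;
         E = dog_E N V Nb d T f M;
         opt = (1 / real T) * (\<Sum>t\<in>{1..T}. f t (Act N Astar));
         err = 4 * M * real (card N) * (1 + ln (real (Vd_bar N V d)))
                 * sqrt (real (Vd_bar N V d) / real T)
     in E (\<lambda>H t. f t (Act N (H t)))
          \<ge> 1 / (1 + \<kappa>) * opt
            - \<kappa> / (1 + \<kappa>) * (\<Sum>i\<in>N. E (\<lambda>H t. coin N Nb (f t) i (H t)))
            - err
      \<and> ((\<forall>i\<in>N. Nb i = N - {i}) \<longrightarrow>
           E (\<lambda>H t. f t (Act N (H t))) \<ge> 1 / (1 + \<kappa>) * opt - err)
      \<and> ((\<forall>i\<in>N. Nb i = {}) \<longrightarrow>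
           E (\<lambda>H t. f t (Act N (H t))) \<ge> (1 - \<kappa>) * opt - err)"
    by (rule main)
qed


end
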